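(* Consider the sparse linear Gaussian model: $S\in\{1,\dots,N\}$, $\mathcal{X}_S=\{\mathbf{x}\in\mathbb{R}^N:\|\mathbf{x}\|_0\le S\}$, $\mathbf{H}\in\mathbb{R}^{M\times N}$ with $\operatorname{spark}(\mathbf{H})>S$, $\sigma>0$, observation $\mathbf{y}=\mathbf{H}\mathbf{x}+\mathbf{n}$, $\mathbf{n}\sim\mathcal{N}(\mathbf{0},\sigma^2\mathbf{I})$, and parameter function $g(\mathbf{x})=x_k$ for a fixed $k\in[N]$. Let $D=\operatorname{rank}(\mathbf{H})$, $\mathbf{H}=\mathbf{U}\mathbf{\Sigma}\mathbf{V}^T$ a thin SVD and $\widetilde{\mathbf{H}}=\mathbf{V}\mathbf{\Sigma}^{-1}$. Let $\mathbf{x}_1\in\mathbb{R}^D$, $C\ge 0$, and let $(a[\mathbf{p}])_{\mathbf{p}\in\mathbb{Z}_+^D}$ satisfy $|a[\mathbf{p}]|\le C^{|\mathbf{p}|}$ for all $\mathbf{p}$. Then the function $$c(\mathbf{x})=\exp\big(\mathbf{x}_1^T\widetilde{\mathbf{H}}^{\dagger}\mathbf{x}\big)\sum_{\mathbf{p}\in\mathbb{Z}_+^D}\frac{a[\mathbf{p}]}{\mathbf{p}!}\Big(\tfrac{1}{\sigma}\widetilde{\mathbf{H}}^{\dagger}\mathbf{x}\Big)^{\mathbf{p}}-x_k,\qquad \mathbf{x}\in\mathcal{X}_S,$$ is a valid bias function at every $\mathbf{x}_0\in\mathcal{X}_S$. In particular, for $\mathbf{H}=\mathbf{I}$ (with thin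 SVD $\mathbf{U}=\mathbf{V}=\mathbf{\Sigma}=\mathbf{I}$), the choice $\mathbf{x}_1=\mathbf{0}$, $a[\mathbf{e}_k]=\sigma$ and $a[\mathbf{p}]=0$ for all other $\mathbf{p}$ yields $c\equiv 0$.
   Context: $[N]=\{1,\dots,N\}$; $\|\mathbf{x}\|_0$ = number of nonzero entries; $\operatorname{spark}$ = minimum number of linearly dependent columns; $\dagger$ = Moore–Penrose pseudoinverse. Thin SVD: $\mathbf{U}\in\mathbb{R}^{M\times D}$, $\mathbf{V}\in\mathbb{R}^{N\times D}$ with orthonormal columns, $\mathbf{\Sigma}$ diagonal positive. Multi-index notation: $|\mathbf{p}|=\sum p_l$, $\mathbf{p}!=\prod p_l!$, $\mathbf{z}^{\mathbf{p}}=\prod z_l^{p_l}$; $\mathbf{e}_k$ is the $k$th unit multi-index. An estimator $\hat g:\mathbb{R}^M\to\mathbb{R}$ has bias $b(\hat g;\mathbf{x})=\mathsf{E}_{\mathbf{x}}\{\hat g(\mathbf{y})\}-x_k$ and variance $v(\hat g;\mathbf{x})$; a bias function $c:\mathcal{X}_S\to\mathbb{R}$ is valid at $\mathbf{x}_0$ if some estimator has $v(\hat g;\mathbf{x}_0)<\infty$ and $b(\hat g;\mathbf{x})=c(\mathbf{x})$ for all $\mathbf{x}\in\mathcal{X}_S$. *)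

theory Defs
  imports "HOL-Probability.Probability"
begin

definition l0norm :: "real^'n \<Rightarrow> nat" where
  "l0norm x = card {i. x $ i \<noteq> 0}"

definition sparse_set :: "nat \<Rightarrow> (real^'n) set" where
  "sparse_set S = {x. l0norm x \<le> S}"

text \<open>spark: minimum number of linearly dependent columns (infinity if none).\<close>
definition cols_dependent :: "real^'n^'m \<Rightarrow> 'n set \<Rightarrow> bool" where
  "cols_dependent H I \<longleftrightarrow>
     (\<exists>c :: 'n \<Rightarrow> real. (\<exists>i\<in>I. c i \<noteq> 0) \<and> (\<Sum>i\<in>I. c i *\<^sub>R column i H) = 0)"

definition spark :: "real^'n^'m \<Rightarrow> enat" where
  "spark H = (INF I \<in> {I. I \<noteq> {} \<and> cols_dependent H I}. enat (card I))"

definition is_pinv :: "real^'n^'m \<Rightarrow> real^'m^'n \<Rightarrow> bool" where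
  "is_pinv A X \<longleftrightarrow> A ** X ** A = A \<and> X ** A ** X = X \<and>
     transpose (A ** X) = A ** X \<and> transpose (X ** A) = X ** A"

definition pinv :: "real^'n^'m \<Rightarrow> real^'m^'n" where
  "pinv A = (THE X. is_pinv A X)"

definition gauss_obs :: "real^'n^'m \<Rightarrow> real \<Rightarrow> real^'n \<Rightarrow> (real^'m) measure" where
  "gauss_obs H \<sigma> x =
     density lborel (\<lambda>y. ennreal (\<Prod>i\<in>UNIV. normal_density ((H *v x) $ i) \<sigma> (y $ i)))"

definition est_mean :: "real^'n^'m \<Rightarrow> real \<Rightarrow> (real^'m \<Rightarrow> real) \<Rightarrow> real^'n \<Rightarrow> real" where
  "est_mean H \<sigma> g x = (\<integral>y. g y \<partial>gauss_obs H \<sigma> x)"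

definition est_bias :: "real^'n^'m \<Rightarrow> real \<Rightarrow> 'n \<Rightarrow> (real^'m \<Rightarrow> real) \<Rightarrow> real^'n \<Rightarrow> real" where
  "est_bias H \<sigma> k g x = est_mean H \<sigma> g x - x $ k"

definition finite_variance :: "real^'n^'m \<Rightarrow> real \<Rightarrow> (real^'m \<Rightarrow> real) \<Rightarrow> real^'n \<Rightarrow> bool" where
  "finite_variance H \<sigma> g x \<longleftrightarrow>
     integrable (gauss_obs H \<sigma> x) g \<and>
     integrable (gauss_obs H \<sigma> x) (\<lambda>y. (g y - est_mean H \<sigma> g x)\<^sup>2)"

definition valid_bias :: "real^'n^'m \<Rightarrow> real \<Rightarrow> nat \<Rightarrow> 'n \<Rightarrow> (real^'n \<Rightarrow> real) \<Rightarrow> real^'n \<Rightarrow> bool" where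
  "valid_bias H \<sigma> S k c x0 \<longleftrightarrow>
     (\<exists>g :: real^'m \<Rightarrow> real. g \<in> borel_measurable borel \<and>
        finite_variance H \<sigma> g x0 \<and>
        (\<forall>x\<in>sparse_set S. integrable (gauss_obs H \<sigma> x) g \<and> est_bias H \<sigma> k g x = c x))"

definition mi_abs :: "('d::finite \<Rightarrow> nat) \<Rightarrow> nat" where
  "mi_abs p = (\<Sum>l\<in>UNIV. p l)"

definition mi_fact :: "('d::finite \<Rightarrow> nat) \<Rightarrow> real" where
  "mi_fact p = (\<Prod>l\<in>UNIV. fact (p l))"

definition mi_pow :: "real^'d \<Rightarrow> ('d::finite \<Rightarrow> nat) \<Rightarrow> real" where
  "mi_pow z p = (\<Prod>l\<in>UNIV. (z $ l) ^ (p l))"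

text \<open>The candidate bias function, given Hd = (pseudoinverse of H-tilde).\<close>
definition cbias :: "real^'n^'d \<Rightarrow> real \<Rightarrow> real^'d \<Rightarrow> (('d::finite \<Rightarrow> nat) \<Rightarrow> real) \<Rightarrow> 'n \<Rightarrow> real^'n \<Rightarrow> real" where
  "cbias Hd \<sigma> x1 a k x =
     exp (x1 \<bullet> (Hd *v x)) *
       (\<Sum>\<^sub>\<infinity>p\<in>UNIV. a p / mi_fact p * mi_pow ((1 / \<sigma>) *\<^sub>R (Hd *v x)) p)
     - x $ k"

end

theory Submission
  imports Defs
begin

lemma Basis_vec_range: "(Basis :: (real^'m::finite) set) = range (\<lambda>j. axis j 1)"
  unfolding Basis_vec_def by auto

lemma inj_axis1: "inj (\<lambda>j::'m::finite. axis j (1::real))"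
  by (auto simp: inj_on_def axis_eq_axis)

lemma inv_axis1[simp]: "inv (\<lambda>j::'m::finite. axis j (1::real)) (axis i 1) = i"
  using inv_f_f[OF inj_axis1, of i] by simp

lemma vec_sum_basis_nth:
  fixes \<omega> :: "(real^'m::finite) \<Rightarrow> real"
  shows "(\<Sum>b\<in>Basis. \<omega> b *\<^sub>R b) $ i = \<omega> (axis i 1)"
proof -
  have "(\<Sum>b\<in>Basis. \<omega> b *\<^sub>R b) $ i = (\<Sum>b\<in>Basis. \<omega> b * (b $ i))" by simp
  also have "\<dots> = (\<Sum>j\<in>UNIV. \<omega> (axis j 1) * (axis j (1::real) $ i))"
    unfolding Basis_vec_range
    by (subst sum.reindex[OF inj_axis1]) auto
  also have "\<dots> = \<omega> (axis i 1)"
    by (simp add: axis_def if_distrib cong: if_cong) 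
  finally show ?thesis .
qed

lemma lborel_vec_prod:
  fixes \<phi> :: "'m::finite \<Rightarrow> real \<Rightarrow> real"
  assumes int: "\<And>i. integrable lborel (\<phi> i)"
  shows "integrable lborel (\<lambda>y::real^'m. \<Prod>i\<in>UNIV. \<phi> i (y$i))"
    and "(\<integral>y. (\<Prod>i\<in>UNIV. \<phi> i (y$i)) \<partial>(lborel::(real^'m) measure)) = (\<Prod>i\<in>UNIV. \<integral>t. \<phi> i t \<partial>lborel)"
proof -
  interpret P: product_sigma_finite "\<lambda>_::real^'m. lborel::real measure"
    by (auto simp: product_sigma_finite_def intro: sigma_finite_lborel)
  define T where "T = (\<lambda>f::(real^'m) \<Rightarrow> real. \<Sum>b\<in>Basis. f b *\<^sub>R b)"
  define \<psi> where "\<psi> = (\<lambda>b::real^'m. \<phi> (inv (\<lambda>j::'m. axis j (1::real)) b))"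
  have Tm: "T \<in> measurable (\<Pi>\<^sub>M b\<in>Basis. lborel) borel" unfolding T_def by measurable
  have eq: "(\<Prod>i\<in>UNIV. \<phi> i (T \<omega> $ i)) = (\<Prod>b\<in>Basis. \<psi> b (\<omega> b))" for \<omega>
  proof -
    have "(\<Prod>b\<in>Basis. \<psi> b (\<omega> b)) = (\<Prod>j\<in>UNIV. \<psi> (axis j 1) (\<omega> (axis j 1)))"
      unfolding Basis_vec_range using inj_axis1
      by (subst prod.reindex) auto
    also have "\<dots> = (\<Prod>j\<in>UNIV. \<phi> j (\<omega> (axis j 1)))"
      unfolding \<psi>_def by simp
    finally show ?thesis unfolding T_def vec_sum_basis_nth by simp
  qed
  have psi_int: "\<And>b. b \<in> Basis \<Longrightarrow> integrable lborel (\<psi> b)" unfolding \<psi>_def using int by auto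
  have pm: "(\<lambda>y::real^'m. \<Prod>i\<in>UNIV. \<phi> i (y$i)) \<in> borel_measurable borel"
    using int by measurable
  have "integrable (\<Pi>\<^sub>M b\<in>Basis. lborel) (\<lambda>\<omega>. \<Prod>b\<in>Basis. \<psi> b (\<omega> b))"
    by (rule P.product_integrable_prod) (auto intro: psi_int)
  then have "integrable (\<Pi>\<^sub>M b\<in>Basis. lborel) (\<lambda>\<omega>. \<Prod>i\<in>UNIV. \<phi> i (T \<omega> $ i))"
    unfolding eq .
  then show "integrable lborel (\<lambda>y::real^'m. \<Prod>i\<in>UNIV. \<phi> i (y$i))"
    apply (subst lborel_eq)
    apply (subst integrable_distr_eq[OF Tm[unfolded T_def] pm])
    apply (simp add: T_def o_def)
    done
  have "(\<integral>y. (\<Prod>i\<in>UNIV. \<phi> i (y$i)) \<partial>(lborel::(real^'m) measure)) =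
     (\<integral>\<omega>. (\<Prod>i\<in>UNIV. \<phi> i (T \<omega> $ i)) \<partial>(\<Pi>\<^sub>M b\<in>Basis. lborel))"
    apply (subst lborel_eq)
    apply (subst integral_distr[OF Tm[unfolded T_def] pm])
    apply (simp add: T_def)
    done
  also have "\<dots> = (\<Prod>b\<in>Basis. \<integral>t. \<psi> b t \<partial>lborel)"
    unfolding eq by (rule P.product_integral_prod) (auto intro: psi_int)
  also have "\<dots> = (\<Prod>i\<in>UNIV. \<integral>t. \<phi> i t \<partial>lborel)"
    unfolding Basis_vec_range using inj_axis1 
    by (subst prod.reindex) (auto simp: \<psi>_def)
  finally show "(\<integral>y. (\<Prod>i\<in>UNIV. \<phi> i (y$i)) \<partial>(lborel::(real^'m) measure)) = (\<Prod>i\<in>UNIV. \<integral>t. \<phi> i t \<partial>lborel)" .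
qed

definition Gm :: "real \<Rightarrow> real^'m::finite \<Rightarrow> (real^'m) measure" where
  "Gm \<sigma> mv = density lborel (\<lambda>y. ennreal (\<Prod>i\<in>UNIV. normal_density (mv$i) \<sigma> (y$i)))"

lemma gauss_obs_Gm: "gauss_obs H \<sigma> x = Gm \<sigma> (H *v x)"
  unfolding gauss_obs_def Gm_def by simp

lemma normal_exp_eq:
  assumes "\<sigma> > 0"
  shows "normal_density m \<sigma> t * exp (a*t) = exp (a*m + \<sigma>\<^sup>2*a\<^sup>2/2) * normal_density (m + \<sigma>\<^sup>2*a) \<sigma> t"
proof -
  have "-(t - m)\<^sup>2/ (2 * \<sigma>\<^sup>2) + a*t = (a*m + \<sigma>\<^sup>2*a\<^sup>2/2) + (-(t - (m + \<sigma>\<^sup>2*a))\<^sup>2/ (2 * \<sigma>\<^sup>2))"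
    using assms by (simp add: field_simps power2_eq_square)
  then show ?thesis unfolding normal_density_def
    by (simp add: exp_add[symmetric] mult_exp_exp)
qed

lemma normal_exp_int:
  assumes "\<sigma> > 0"
  shows "integrable lborel (\<lambda>t. normal_density m \<sigma> t * exp (a*t))"
    and "(\<integral>t. normal_density m \<sigma> t * exp (a*t) \<partial>lborel) = exp (a*m + \<sigma>\<^sup>2*a\<^sup>2/2)"
  unfolding normal_exp_eq[OF assms] using assms by auto

lemma normal_exp_abs_int:
  assumes "\<sigma> > 0"
  shows "integrable lborel (\<lambda>t. normal_density m \<sigma> t * exp (b*\<bar>t\<bar>))"
proof (rule Bochner_Integration.integrable_bound)
  show "integrable lborel (\<lambda>t. normal_density m \<sigma> t * exp (b*t) + normal_density m \<sigma> t * exp ((-b)*t))"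
    using normal_exp_int(1)[OF assms, of m b] normal_exp_int(1)[OF assms, of m "-b"] by (rule Bochner_Integration.integrable_add)
  show "(\<lambda>t. normal_density m \<sigma> t * exp (b*\<bar>t\<bar>)) \<in> borel_measurable lborel" by measurable
  show "AE t in lborel. norm (normal_density m \<sigma> t * exp (b*\<bar>t\<bar>))
     \<le> norm (normal_density m \<sigma> t * exp (b*t) + normal_density m \<sigma> t * exp ((-b)*t))"
  proof (intro AE_I2)
    fix t
    have "exp (b*\<bar>t\<bar>) \<le> exp (b*t) + exp ((-b)*t)"
      by (cases "t \<ge> 0") (auto simp: add_increasing add_increasing2)
    then have "normal_density m \<sigma> t * exp (b*\<bar>t\<bar>) \<le> normal_density m \<sigma> t * (exp (b*t) + exp ((-b)*t))"
      by (intro mult_left_mono) auto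
    then show "norm (normal_density m \<sigma> t * exp (b*\<bar>t\<bar>))
     \<le> norm (normal_density m \<sigma> t * exp (b*t) + normal_density m \<sigma> t * exp ((-b)*t))"
      by (simp add: algebra_simps)
  qed
qed

lemma Gm_prod:
  fixes f :: "'m::finite \<Rightarrow> real \<Rightarrow> real"
  assumes "\<sigma> > 0" and [measurable]: "\<And>i. f i \<in> borel_measurable borel"
    and int: "\<And>i. integrable lborel (\<lambda>t. normal_density (mv$i) \<sigma> t * f i t)"
  shows "integrable (Gm \<sigma> mv) (\<lambda>y. \<Prod>i\<in>UNIV. f i (y$i))"
    and "(\<integral>y. (\<Prod>i\<in>UNIV. f i (y$i)) \<partial>Gm \<sigma> mv) = (\<Prod>i\<in>UNIV. \<integral>t. normal_density (mv$i) \<sigma> t * f i t \<partial>lborel)"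
proof -
  have eq: "(\<Prod>i\<in>UNIV. normal_density (mv$i) \<sigma> (y$i)) * (\<Prod>i\<in>UNIV. f i (y$i))
      = (\<Prod>i\<in>UNIV. normal_density (mv$i) \<sigma> (y$i) * f i (y$i))" for y :: "real^'m"
    by (simp add: prod.distrib)
  show "integrable (Gm \<sigma> mv) (\<lambda>y. \<Prod>i\<in>UNIV. f i (y$i))"
    unfolding Gm_def
    by (subst integrable_density) (auto simp: eq prod_nonneg intro!: lborel_vec_prod(1) int)
  show "(\<integral>y. (\<Prod>i\<in>UNIV. f i (y$i)) \<partial>Gm \<sigma> mv) = (\<Prod>i\<in>UNIV. \<integral>t. normal_density (mv$i) \<sigma> t * f i t \<partial>lborel)"
    unfolding Gm_def
    by (subst integral_density) (auto simp: eq prod_nonneg intro!: lborel_vec_prod(2) int)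
qed

lemma Gm_prob:
  assumes "\<sigma> > 0"
  shows "prob_space (Gm \<sigma> (mv::real^'m::finite))"
proof
  have "integrable lborel (\<lambda>y::real^'m. \<Prod>i\<in>UNIV. normal_density (mv$i) \<sigma> (y$i))"
    by (rule lborel_vec_prod(1)) (simp add: assms)
  moreover have "(\<integral>y. (\<Prod>i\<in>UNIV. normal_density (mv$i) \<sigma> (y$i)) \<partial>(lborel::(real^'m) measure)) = 1"
    by (subst lborel_vec_prod(2)) (simp_all add: assms)
  ultimately have "(\<integral>\<^sup>+y. ennreal (\<Prod>i\<in>UNIV. normal_density (mv$i) \<sigma> (y$i)) \<partial>(lborel::(real^'m) measure)) = 1"
    by (subst nn_integral_eq_integral) (auto simp: prod_nonneg)
  then show "emeasure (Gm \<sigma> mv) (space (Gm \<sigma> mv)) = 1"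
    unfolding Gm_def by (simp add: emeasure_density)
qed

lemma Gm_dom_int:
  assumes "\<sigma> > 0"
  shows "integrable (Gm \<sigma> (mv::real^'m::finite)) (\<lambda>y. exp (B * (\<Sum>i\<in>UNIV. \<bar>y$i\<bar>)))"
proof -
  have "integrable (Gm \<sigma> mv) (\<lambda>y. \<Prod>i\<in>UNIV. exp (B * \<bar>y$i\<bar>))"
    by (rule Gm_prod(1)[OF assms]) (auto intro: normal_exp_abs_int[OF assms])
  then show ?thesis by (simp add: sum_distrib_left exp_sum)
qed

lemma Gm_bound_int:
  assumes "\<sigma> > 0" "f \<in> borel_measurable borel" "\<And>y. \<bar>f y\<bar> \<le> K * exp (B * (\<Sum>i\<in>UNIV. \<bar>y$i\<bar>))"
  shows "integrable (Gm \<sigma> (mv::real^'m::finite)) f"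
proof (rule Bochner_Integration.integrable_bound)
  show "integrable (Gm \<sigma> mv) (\<lambda>y. K * exp (B * (\<Sum>i\<in>UNIV. \<bar>y$i\<bar>)))"
    using Gm_dom_int[OF assms(1)] by auto
  show "f \<in> borel_measurable (Gm \<sigma> mv)" using assms(2) unfolding Gm_def by simp
  show "AE x in Gm \<sigma> mv. norm (f x) \<le> norm (K * exp (B * (\<Sum>i\<in>UNIV. \<bar>x$i\<bar>)))"
    using assms(3) by (auto intro!: AE_I2 order_trans[OF _ abs_ge_self])
qed

fun hp :: "real \<Rightarrow> nat \<Rightarrow> real \<Rightarrow> real" where
  "hp v 0 w = 1"
| "hp v (Suc 0) w = w"
| "hp v (Suc (Suc n)) w = w * hp v (Suc n) w - real (Suc n) * v * hp v n w"

lemma hp_rec: "hp v (Suc n) w = w * hp v n w - real n * v * hp v (n - 1) w"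
  by (cases n) auto

lemma hp_deriv: "(hp v n has_real_derivative (real n * hp v (n - 1) w)) (at w)"
proof (induction n arbitrary: w rule: less_induct)
  case (less n)
  show ?case
  proof (cases n)
    case 0 then show ?thesis by simp
  next
    case (Suc m)
    show ?thesis
    proof (cases m)
      case 0 with Suc show ?thesis by (auto intro!: derivative_eq_intros)
    next
      case (Suc k)
      have IH1: "(hp v (Suc k) has_real_derivative (real (Suc k) * hp v k w)) (at w)"
        using less[of "Suc k"] \<open>n = Suc m\<close> Suc by simp
      have IH2: "(hp v k has_real_derivative (real k * hp v (k - 1) w)) (at w)"
        using less[of k] \<open>n = Suc m\<close> Suc by simp
      have "((\<lambda>w. w * hp v (Suc k) w - real (Suc k) * v * hp v k w) has_real_derivative
          (1 * hp v (Suc k) w + (real (Suc k) * hp v k w) * w - real (Suc k) * v * (real k * hp v (k - 1) w))) (at w)"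
        by (rule DERIV_diff[OF DERIV_mult[OF DERIV_ident IH1] DERIV_cmult[OF IH2]])
      moreover have "1 * hp v (Suc k) w + (real (Suc k) * hp v k w) * w - real (Suc k) * v * (real k * hp v (k - 1) w)
          = real (Suc (Suc k)) * hp v (Suc k) w"
        using arg_cong[OF hp_rec[of v k w], of "\<lambda>x. real (Suc k) * x"] by (simp add: algebra_simps)
      ultimately show ?thesis using \<open>n = Suc m\<close> Suc by simp
    qed
  qed
qed

definition psi :: "real \<Rightarrow> nat \<Rightarrow> real \<Rightarrow> real \<Rightarrow> real" where
  "psi v n t z = exp (t*z - v * t\<^sup>2/2) * hp v n (z - v * t)"

lemma psi_deriv: "((\<lambda>t. psi v n t z) has_real_derivative psi v (Suc n) t z) (at t)"
proof -
  have d1: "((\<lambda>t. t*z - v * t\<^sup>2/2) has_real_derivative (z - v * t)) (at t)"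
    by (rule DERIV_cong) (auto intro!: derivative_eq_intros simp: power2_eq_square algebra_simps)
  have d2: "((\<lambda>t. z - v * t) has_real_derivative (- v)) (at t)"
    by (rule DERIV_cong) (auto intro!: derivative_eq_intros)
  have e: "((\<lambda>t. exp (t*z - v * t\<^sup>2/2)) has_real_derivative exp (t*z - v * t\<^sup>2/2) * (z - v * t)) (at t)"
    by (rule DERIV_chain2[OF DERIV_exp d1])
  have h: "((\<lambda>t. hp v n (z - v * t)) has_real_derivative (real n * hp v (n - 1) (z - v * t)) * (- v)) (at t)"
    by (rule DERIV_chain2[OF hp_deriv d2])
  have "((\<lambda>t. exp (t*z - v * t\<^sup>2/2) * hp v n (z - v * t)) has_real_derivative
      (exp (t*z - v * t\<^sup>2/2) * (z - v * t)) * hp v n (z - v * t) + ((real n * hp v (n - 1) (z - v * t)) * (- v)) * exp (t*z - v * t\<^sup>2/2)) (at t)"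
    by (rule DERIV_mult[OF e h])
  moreover have "(exp (t*z - v * t\<^sup>2/2) * (z - v * t)) * hp v n (z - v * t) + ((real n * hp v (n - 1) (z - v * t)) * (- v)) * exp (t*z - v * t\<^sup>2/2)
      = psi v (Suc n) t z"
    unfolding psi_def hp_rec[of v n] by (simp add: algebra_simps)
  ultimately show ?thesis unfolding psi_def by simp
qed

lemma hp_bound:
  assumes "v \<ge> 0"
  shows "\<bar>hp v n w\<bar> \<le> (\<bar>w\<bar> + sqrt (v * real n)) ^ n"
proof (induction n rule: less_induct)
  case (less n)
  show ?case
  proof (cases n)
    case 0 then show ?thesis by simp
  next
    case (Suc m)
    show ?thesis
    proof (cases m)
      case 0 with Suc assms show ?thesis by simp
    next
      case (Suc k)
      define r where "r = \<bar>w\<bar>"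
      define a where "a = r + sqrt (v * real (Suc k))"
      define a' where "a' = r + sqrt (v * real k)"
      define b where "b = r + sqrt (v * real (Suc (Suc k)))"
      have r0: "r \<ge> 0" unfolding r_def by simp
      have a'a: "0 \<le> a'" "a' \<le> a" unfolding a'_def a_def using assms r0 by (auto intro!: real_sqrt_le_mono mult_left_mono)
      have ab: "0 \<le> a" "a \<le> b" unfolding b_def a_def using assms r0 by (auto intro!: real_sqrt_le_mono mult_left_mono)
      have I1: "\<bar>hp v (Suc k) w\<bar> \<le> a ^ Suc k" using less[of "Suc k"] \<open>n = Suc m\<close> Suc unfolding a_def r_def by simp
      have I2: "\<bar>hp v k w\<bar> \<le> a' ^ k" using less[of k] \<open>n = Suc m\<close> Suc unfolding a'_def r_def by simp
      have "\<bar>hp v (Suc (Suc k)) w\<bar> \<le> \<bar>w * hp v (Suc k) w\<bar> + \<bar>real (Suc k) * v * hp v k w\<bar>"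
        by (simp only: hp.simps abs_triangle_ineq4)
      also have "\<dots> = r * \<bar>hp v (Suc k) w\<bar> + real (Suc k) * v * \<bar>hp v k w\<bar>"
        using assms unfolding r_def by (simp add: abs_mult)
      also have "\<dots> \<le> r * a ^ Suc k + real (Suc k) * v * a ^ k"
      proof (rule add_mono)
        show "r * \<bar>hp v (Suc k) w\<bar> \<le> r * a ^ Suc k" using I1 r0 by (rule mult_left_mono)
        have "\<bar>hp v k w\<bar> \<le> a ^ k" using I2 power_mono[OF a'a(2) a'a(1), of k] by linarith
        then show "real (Suc k) * v * \<bar>hp v k w\<bar> \<le> real (Suc k) * v * a ^ k"
          using assms by (intro mult_left_mono) auto
      qed
      also have "\<dots> = a ^ k * (r * a + real (Suc k) * v)" by (simp add: algebra_simps)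
      also have "\<dots> \<le> b ^ k * b\<^sup>2"
      proof (intro mult_mono power_mono)
        have sq: "sqrt (v * real (Suc k)) \<le> 2 * sqrt (v * real (Suc (Suc k)))"
        proof -
          have "sqrt (v * real (Suc k)) \<le> sqrt (v * real (Suc (Suc k)))"
            using assms by (intro real_sqrt_le_mono mult_left_mono) auto
          moreover have "sqrt (v * real (Suc (Suc k))) \<ge> 0" using assms by simp
          ultimately show ?thesis by linarith
        qed
        have "r * a + real (Suc k) * v = r\<^sup>2 + r * sqrt (v * real (Suc k)) + v * real (Suc k)"
          unfolding a_def by (simp add: algebra_simps power2_eq_square)
        also have "\<dots> \<le> r\<^sup>2 + r * (2 * sqrt (v * real (Suc (Suc k)))) + v * real (Suc (Suc k))"
          using sq r0 assms by (intro add_mono mult_left_mono) auto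
        also have "\<dots> = b\<^sup>2" unfolding b_def using assms
          by (simp add: power2_eq_square algebra_simps)
        finally show "r * a + real (Suc k) * v \<le> b\<^sup>2" .
      qed (use ab r0 assms in auto)
      also have "\<dots> = b ^ Suc (Suc k)" by (simp add: power2_eq_square algebra_simps)
      finally show ?thesis using \<open>n = Suc m\<close> Suc unfolding b_def r_def by simp
    qed
  qed
qed

lemma pow_fact_le_exp:
  assumes "(x::real) \<ge> 0"
  shows "x ^ n / fact n \<le> exp x"
proof -
  have s: "(\<lambda>k. x^k /\<^sub>R fact k) sums exp x" by (rule exp_converges)
  have "x ^ n / fact n \<le> (\<Sum>k<Suc n. x^k /\<^sub>R fact k)"
    using assms by (simp add: divide_inverse_commute) (intro add_increasing sum_nonneg, auto simp: divide_inverse_commute)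
  also have "\<dots> \<le> exp x"
    using s assms by (intro sum_le_suminf[where f="\<lambda>k. x^k /\<^sub>R fact k", THEN order_trans]) (auto simp: sums_iff)
  finally show ?thesis .
qed

lemma pow_le_fact_exp:
  assumes "(x::real) \<ge> 0"
  shows "x ^ n \<le> fact n * exp x"
  using pow_fact_le_exp[OF assms, of n] by (simp add: field_simps)

lemma summable_sqrt_pow:
  assumes "c \<ge> 0"
  shows "summable (\<lambda>n. c ^ n * sqrt (real n) ^ n / fact n)"
proof (rule summable_comparison_test[OF _ summable_add[OF summable_exp[of "4 * c\<^sup>2 * exp 1"] summable_geometric[of "1/4::real"]]])
  show "\<exists>N. \<forall>n\<ge>N. norm (c ^ n * sqrt (real n) ^ n / fact n) \<le> inverse (fact n) * (4 * c\<^sup>2 * exp 1) ^ n + (1 / 4) ^ n"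
  proof (intro exI allI impI)
    fix n :: nat
    have f0: "fact n > (0::real)" by simp
    have "real n ^ n \<le> fact n * exp (real n)" by (rule pow_le_fact_exp) simp
    then have "sqrt (real n) ^ n \<le> sqrt (fact n * exp (real n))"
      by (simp add: real_sqrt_power[symmetric] del: real_sqrt_power)
    then have "c ^ n * sqrt (real n) ^ n / fact n \<le> c ^ n * sqrt (fact n * exp (real n)) / fact n"
      using assms by (intro divide_right_mono mult_left_mono) auto
    also have "\<dots> = sqrt ((c\<^sup>2 * exp 1) ^ n / fact n)"
    proof -
      have "sqrt ((c\<^sup>2 * exp 1) ^ n / fact n) = sqrt ((c\<^sup>2) ^ n) * sqrt (exp (real n)) / sqrt (fact n)"
        by (simp add: real_sqrt_divide real_sqrt_mult power_mult_distrib exp_of_nat_mult[symmetric])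
      also have "\<dots> = c ^ n * sqrt (exp (real n)) / sqrt (fact n)"
        using assms by (simp add: power2_eq_square power_mult_distrib real_sqrt_mult)
      also have "\<dots> = c ^ n * sqrt (fact n * exp (real n)) / fact n"
        using f0 by (simp add: real_sqrt_mult field_simps)
      finally show ?thesis by simp
    qed
    also have "\<dots> = sqrt ((inverse (fact n) * (4 * c\<^sup>2 * exp 1) ^ n) * (1/4)^n)"
      by (simp add: power_mult_distrib field_simps)
    also have "\<dots> \<le> ((inverse (fact n) * (4 * c\<^sup>2 * exp 1) ^ n) + (1/4)^n) / 2"
      by (rule arith_geo_mean_sqrt) auto
    also have "\<dots> \<le> inverse (fact n) * (4 * c\<^sup>2 * exp 1) ^ n + (1 / 4) ^ n" by simp
    finally show "norm (c ^ n * sqrt (real n) ^ n / fact n) \<le> inverse (fact n) * (4 * c\<^sup>2 * exp 1) ^ n + (1 / 4) ^ n"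
      using assms by simp
  qed
qed simp

lemma pow_add_le:
  assumes "(a::real) \<ge> 0" "b \<ge> 0"
  shows "(a + b) ^ n \<le> 2 ^ n * (a ^ n + b ^ n)"
proof -
  have "(a + b) ^ n \<le> (2 * max a b) ^ n" using assms by (intro power_mono) auto
  also have "\<dots> = 2 ^ n * max a b ^ n" by (simp add: power_mult_distrib)
  also have "max a b ^ n \<le> a ^ n + b ^ n" using assms by (auto simp: max_def)
  finally show ?thesis by simp
qed

lemma psi_bound:
  assumes "v \<ge> 0" "\<bar>t\<bar> \<le> R"
  shows "\<bar>psi v n t z\<bar> \<le> exp (R * \<bar>z\<bar>) * (\<bar>z\<bar> + v * R + sqrt (v * real n)) ^ n"
proof -
  have e: "exp (t*z - v * t\<^sup>2/2) \<le> exp (R * \<bar>z\<bar>)"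
  proof -
    have "t*z \<le> \<bar>t\<bar> * \<bar>z\<bar>" by (simp add: abs_mult[symmetric])
    also have "\<dots> \<le> R * \<bar>z\<bar>" using assms by (intro mult_right_mono) auto
    moreover have "v * t\<^sup>2/2 \<ge> 0" using assms by simp
    ultimately show ?thesis by simp
  qed
  have "\<bar>v * t\<bar> \<le> v * R" using assms by (simp add: abs_mult mult_left_mono)
  then have "\<bar>z - v * t\<bar> \<le> \<bar>z\<bar> + v * R"
    using abs_triangle_ineq4[of z "v * t"] by linarith
  then have "\<bar>z - v * t\<bar> + sqrt (v * real n) \<le> \<bar>z\<bar> + v * R + sqrt (v * real n)" by simp
  then have "(\<bar>z - v * t\<bar> + sqrt (v * real n)) ^ n \<le> (\<bar>z\<bar> + v * R + sqrt (v * real n)) ^ n"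
    by (rule power_mono) (use assms in simp)
  then have h: "\<bar>hp v n (z - v * t)\<bar> \<le> (\<bar>z\<bar> + v * R + sqrt (v * real n)) ^ n"
    using hp_bound[OF assms(1), of n "z - v * t"] by linarith
  show ?thesis unfolding psi_def abs_mult
    using e h by (intro mult_mono) auto
qed

lemma psi_bound1:
  assumes "v \<ge> 0" "\<bar>t\<bar> \<le> R"
  shows "\<bar>psi v n t z\<bar> \<le> (fact n * exp (v * R + sqrt (v * real n))) * exp ((R+1) * \<bar>z\<bar>)"
proof -
  have R0: "R \<ge> 0" using assms by linarith
  have "(\<bar>z\<bar> + v * R + sqrt (v * real n)) ^ n \<le> fact n * exp (\<bar>z\<bar> + v * R + sqrt (v * real n))"
    using assms R0 by (intro pow_le_fact_exp) auto
  then have m: "exp (R * \<bar>z\<bar>) * (\<bar>z\<bar> + v * R + sqrt (v * real n)) ^ n \<le> exp (R * \<bar>z\<bar>) * (fact n * exp (\<bar>z\<bar> + v * R + sqrt (v * real n)))"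
    by (rule mult_left_mono) simp
  have "\<bar>psi v n t z\<bar> \<le> exp (R * \<bar>z\<bar>) * (fact n * exp (\<bar>z\<bar> + v * R + sqrt (v * real n)))"
    using psi_bound[OF assms, of n z] m by linarith
  also have "\<dots> = (fact n * exp (v * R + sqrt (v * real n))) * exp ((R+1) * \<bar>z\<bar>)"
    by (simp add: algebra_simps exp_add[symmetric])
  finally show ?thesis .
qed

definition K0 :: "real \<Rightarrow> real \<Rightarrow> real" where
  "K0 v C = (\<Sum>n. (2 * C * sqrt v) ^ n * sqrt (real n) ^ n / fact n)"

lemma psi_series:
  assumes "v \<ge> 0" "C \<ge> 0"
  shows "summable (\<lambda>n. C ^ n / fact n * \<bar>psi v n t z\<bar>)"
    and "(\<Sum>n. C ^ n / fact n * \<bar>psi v n t z\<bar>) \<le> (exp (2 * C * v * \<bar>t\<bar>) + K0 v C) * exp ((\<bar>t\<bar> + 2*C) * \<bar>z\<bar>)"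
proof -
  define A where "A n = (2*C*(\<bar>z\<bar> + v * \<bar>t\<bar>)) ^ n / fact n" for n
  define B where "B n = (2 * C * sqrt v) ^ n * sqrt (real n) ^ n / fact n" for n
  have sA: "summable A" unfolding A_def using summable_exp[of "2*C*(\<bar>z\<bar> + v * \<bar>t\<bar>)"] by (simp add: divide_inverse_commute)
  have sA': "A sums exp (2*C*(\<bar>z\<bar> + v * \<bar>t\<bar>))" unfolding A_def using exp_converges[of "2*C*(\<bar>z\<bar> + v * \<bar>t\<bar>)"]
    by (simp add: divide_inverse_commute)
  have sB: "summable B" unfolding B_def using summable_sqrt_pow[of "2 * C * sqrt v"] assms by simp
  have bnd: "C ^ n / fact n * \<bar>psi v n t z\<bar> \<le> exp (\<bar>t\<bar> * \<bar>z\<bar>) * (A n + B n)" for n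
  proof -
    have "\<bar>psi v n t z\<bar> \<le> exp (\<bar>t\<bar> * \<bar>z\<bar>) * (\<bar>z\<bar> + v * \<bar>t\<bar> + sqrt (v * real n)) ^ n"
      by (rule psi_bound[OF assms(1)]) simp
    also have "\<dots> \<le> exp (\<bar>t\<bar> * \<bar>z\<bar>) * (2 ^ n * ((\<bar>z\<bar> + v * \<bar>t\<bar>) ^ n + sqrt (v * real n) ^ n))"
      using assms by (intro mult_left_mono pow_add_le) auto
    finally have "C ^ n / fact n * \<bar>psi v n t z\<bar> \<le> C ^ n / fact n * (exp (\<bar>t\<bar> * \<bar>z\<bar>) * (2 ^ n * ((\<bar>z\<bar> + v * \<bar>t\<bar>) ^ n + sqrt (v * real n) ^ n)))"
      using assms by (intro mult_left_mono) auto
    also have "\<dots> = exp (\<bar>t\<bar> * \<bar>z\<bar>) * (A n + B n)"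
      unfolding A_def B_def real_sqrt_mult power_mult_distrib by (simp add: algebra_simps)
    finally show ?thesis .
  qed
  have sAB: "summable (\<lambda>n. exp (\<bar>t\<bar> * \<bar>z\<bar>) * (A n + B n))"
    by (intro summable_mult summable_add sA sB)
  show sm: "summable (\<lambda>n. C ^ n / fact n * \<bar>psi v n t z\<bar>)"
    by (rule summable_comparison_test[OF _ sAB]) (use bnd assms in auto)
  have "(\<Sum>n. C ^ n / fact n * \<bar>psi v n t z\<bar>) \<le> (\<Sum>n. exp (\<bar>t\<bar> * \<bar>z\<bar>) * (A n + B n))"
    by (rule suminf_le[OF bnd sm sAB])
  also have "\<dots> = exp (\<bar>t\<bar> * \<bar>z\<bar>) * (exp (2*C*(\<bar>z\<bar> + v * \<bar>t\<bar>)) + K0 v C)"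
    using sA' sB unfolding K0_def B_def[symmetric]
    by (subst suminf_mult) (auto intro!: summable_add sA sB simp: suminf_add[symmetric] sums_iff)
  also have "\<dots> \<le> (exp (2 * C * v * \<bar>t\<bar>) + K0 v C) * exp ((\<bar>t\<bar> + 2*C) * \<bar>z\<bar>)"
  proof -
    have K0n: "K0 v C \<ge> 0" unfolding K0_def using sB assms unfolding B_def
      by (intro suminf_nonneg) auto
    have "exp (\<bar>t\<bar> * \<bar>z\<bar>) \<le> exp ((\<bar>t\<bar> + 2*C) * \<bar>z\<bar>)" using assms by (simp add: algebra_simps)
    then have "exp (\<bar>t\<bar> * \<bar>z\<bar>) * K0 v C \<le> exp ((\<bar>t\<bar> + 2*C) * \<bar>z\<bar>) * K0 v C"
      using K0n by (intro mult_right_mono) auto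
    moreover have "exp (\<bar>t\<bar> * \<bar>z\<bar>) * exp (2*C*(\<bar>z\<bar> + v * \<bar>t\<bar>)) = exp (2 * C * v * \<bar>t\<bar>) * exp ((\<bar>t\<bar> + 2*C) * \<bar>z\<bar>)"
      by (simp add: exp_add[symmetric] algebra_simps)
    ultimately show ?thesis by (simp add: algebra_simps)
  qed
  finally show "(\<Sum>n. C ^ n / fact n * \<bar>psi v n t z\<bar>) \<le> (exp (2 * C * v * \<bar>t\<bar>) + K0 v C) * exp ((\<bar>t\<bar> + 2*C) * \<bar>z\<bar>)" .
qed

lemma DUI:
  fixes f f' :: "real \<Rightarrow> 'a \<Rightarrow> real"
  assumes intf: "\<And>t. integrable M (f t)"
    and mf': "f' t0 \<in> borel_measurable M"
    and der: "\<And>t y. ((\<lambda>t. f t y) has_real_derivative f' t y) (at t)"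
    and G: "integrable M G" and bnd: "\<And>t y. \<bar>t - t0\<bar> \<le> 1 \<Longrightarrow> \<bar>f' t y\<bar> \<le> G y"
  shows "((\<lambda>t. \<integral>y. f t y \<partial>M) has_real_derivative (\<integral>y. f' t0 y \<partial>M)) (at t0)"
proof -
  have lip: "\<bar>f t y - f t0 y\<bar> \<le> G y * \<bar>t - t0\<bar>" if "\<bar>t - t0\<bar> \<le> 1" for t y
  proof -
    have "norm ((\<lambda>t. f t y) t - (\<lambda>t. f t y) t0) \<le> G y * norm (t - t0)"
    proof (rule field_differentiable_bound[where S="{t0-1..t0+1}" and f'="\<lambda>t. f' t y"])
      show "convex {t0-1..t0+1}" by simp
      show "((\<lambda>t. f t y) has_field_derivative f' z y) (at z within {t0 - 1..t0 + 1})" for z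
        using der[of y z] by (rule has_field_derivative_at_within)
      show "norm (f' z y) \<le> G y" if "z \<in> {t0 - 1..t0 + 1}" for z
        using bnd[of z y] that by auto
    qed (use that in auto)
    then show ?thesis by simp
  qed
  show ?thesis
    unfolding has_field_derivative_iff tendsto_at_iff_sequentially
  proof (intro allI impI)
    fix X :: "nat \<Rightarrow> real"
    assume X: "\<forall>i. X i \<in> UNIV - {t0}" and Xl: "X \<longlonglongrightarrow> t0"
    from Xl have "\<forall>\<^sub>F n in sequentially. dist (X n) t0 < 1" by (rule tendstoD) simp
    then obtain N where N: "\<And>n. n \<ge> N \<Longrightarrow> \<bar>X n - t0\<bar> < 1" by (auto simp: eventually_sequentially dist_real_def)
    define s where "s n y = (f (X (n+N)) y - f t0 y) / (X (n+N) - t0)" for n y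
    have Xne: "X n \<noteq> t0" for n using X by auto
    have A: "(\<lambda>n. integral\<^sup>L M (s n)) \<longlonglongrightarrow> integral\<^sup>L M (f' t0)"
    proof (rule integral_dominated_convergence[where w=G])
      show "f' t0 \<in> borel_measurable M" by (rule mf')
      show "s n \<in> borel_measurable M" for n unfolding s_def using intf by measurable
      show "integrable M G" by (rule G)
      show "AE y in M. (\<lambda>n. s n y) \<longlonglongrightarrow> f' t0 y"
      proof (rule AE_I2)
        fix y
        have "((\<lambda>t. (f t y - f t0 y) / (t - t0)) \<longlongrightarrow> f' t0 y) (at t0)"
          using der[of y t0] unfolding has_field_derivative_iff .
        then have "((\<lambda>t. (f t y - f t0 y) / (t - t0)) \<circ> (\<lambda>n. X (n + N))) \<longlonglongrightarrow> f' t0 y"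
          unfolding tendsto_at_iff_sequentially using X LIMSEQ_ignore_initial_segment[OF Xl, of N] by auto
        then show "(\<lambda>n. s n y) \<longlonglongrightarrow> f' t0 y" unfolding s_def o_def .
      qed
      show "AE y in M. norm (s n y) \<le> G y" for n
      proof (rule AE_I2)
        fix y
        have "\<bar>f (X (n+N)) y - f t0 y\<bar> \<le> G y * \<bar>X (n+N) - t0\<bar>"
          using lip N[of "n+N"] by auto
        then show "norm (s n y) \<le> G y" unfolding s_def using Xne[of "n+N"]
          by (simp add: abs_divide divide_le_eq)
      qed
    qed
    have eq: "integral\<^sup>L M (s n) = ((\<lambda>t. ((\<integral>y. f t y \<partial>M) - (\<integral>y. f t0 y \<partial>M)) / (t - t0)) \<circ> X) (n + N)" for n
      unfolding s_def o_def using intf by (simp add: integral_diff)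
    have "(\<lambda>n. integral\<^sup>L M (s n)) = (\<lambda>n. ((\<lambda>t. ((\<integral>y. f t y \<partial>M) - (\<integral>y. f t0 y \<partial>M)) / (t - t0)) \<circ> X) (n + N))"
      by (rule ext) (rule eq)
    with A have "(\<lambda>n. ((\<lambda>t. ((\<integral>y. f t y \<partial>M) - (\<integral>y. f t0 y \<partial>M)) / (t - t0)) \<circ> X) (n + N)) \<longlonglongrightarrow> (\<integral>y. f' t0 y \<partial>M)"
      by simp
    then show "((\<lambda>t. ((\<integral>y. f t y \<partial>M) - (\<integral>y. f t0 y \<partial>M)) / (t - t0)) \<circ> X) \<longlonglongrightarrow> (\<integral>y. f' t0 y \<partial>M)"
      by (rule LIMSEQ_offset)
  qed
qed

definition Psi :: "real \<Rightarrow> real^'d^'m \<Rightarrow> ('d \<Rightarrow> nat) \<Rightarrow> real^'d \<Rightarrow> real^'m \<Rightarrow> real" where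
  "Psi vv U p s y = (\<Prod>l\<in>UNIV. psi vv (p l) (s$l) ((transpose U *v y)$l))"

lemma inner_Umv: "(U *v s) \<bullet> y = s \<bullet> (transpose U *v y)"
  for U :: "real^'d^'m" and s :: "real^'d" and y :: "real^'m"
proof -
  have "s \<bullet> (transpose U *v y) = (y v* U) \<bullet> s" by (simp add: inner_commute)
  also have "\<dots> = y \<bullet> (U *v s)" by (rule dot_lmul_matrix)
  finally show ?thesis by (simp add: inner_commute)
qed

lemma orth_norm:
  fixes U :: "real^'d^'m"
  assumes "transpose U ** U = mat 1"
  shows "(U *v s) \<bullet> (U *v s) = s \<bullet> s"
  by (simp add: inner_Umv matrix_vector_mul_assoc assms)

lemma orth_entry:
  fixes U :: "real^'d^'m"
  assumes "transpose U ** U = mat 1"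
  shows "\<bar>U$i$l\<bar> \<le> 1"
proof -
  have "(\<Sum>i\<in>UNIV. (U$i$l)\<^sup>2) = 1"
    using arg_cong[OF assms, of "\<lambda>A. A$l$l"]
    by (simp add: matrix_matrix_mult_def transpose_def mat_def power2_eq_square)
  moreover have "(U$i$l)\<^sup>2 \<le> (\<Sum>i\<in>UNIV. (U$i$l)\<^sup>2)"
    by (rule member_le_sum) auto
  ultimately have "(U$i$l)\<^sup>2 \<le> 1" by simp
  then show ?thesis by (simp add: abs_square_le_1)
qed

lemma z_bound:
  fixes U :: "real^'d^'m"
  assumes "transpose U ** U = mat 1"
  shows "\<bar>(transpose U *v y)$l\<bar> \<le> (\<Sum>i\<in>UNIV. \<bar>y$i\<bar>)"
proof -
  have "\<bar>(transpose U *v y)$l\<bar> = \<bar>\<Sum>i\<in>UNIV. U$i$l * y$i\<bar>"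
    by (simp add: matrix_vector_mult_def transpose_def)
  also have "\<dots> \<le> (\<Sum>i\<in>UNIV. \<bar>U$i$l * y$i\<bar>)" by (rule sum_abs)
  also have "\<dots> \<le> (\<Sum>i\<in>UNIV. \<bar>y$i\<bar>)"
    by (intro sum_mono) (simp add: abs_mult mult_left_le_one_le orth_entry[OF assms])
  finally show ?thesis .
qed

lemma hp_cont: "continuous_on UNIV (hp vv n)"
  by (rule continuous_at_imp_continuous_on) (auto intro: DERIV_isCont[OF hp_deriv])

lemma Psi_cont: "continuous_on UNIV (Psi vv U p s)"
proof -
  have eq: "Psi vv U p s = (\<lambda>y. \<Prod>l\<in>UNIV. exp (s$l * (\<Sum>i\<in>UNIV. U$i$l * y$i) - vv * (s$l)\<^sup>2/2) *
     hp vv (p l) ((\<Sum>i\<in>UNIV. U$i$l * y$i) - vv * s$l))"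
    unfolding Psi_def psi_def by (simp add: matrix_vector_mult_def transpose_def)
  show ?thesis unfolding eq
    by (intro continuous_intros continuous_on_compose2[OF hp_cont]) auto
qed

lemma Psi_meas: "Psi vv U p s \<in> borel_measurable borel"
  by (rule borel_measurable_continuous_onI[OF Psi_cont])

lemma Psi_bound:
  fixes U :: "real^'d^'m"
  assumes orth: "transpose U ** U = mat 1" and vv: "vv \<ge> 0" and R: "R \<ge> 0"
  shows "\<exists>K. \<forall>s y. (\<forall>l. \<bar>s$l\<bar> \<le> R) \<longrightarrow> \<bar>Psi vv U p s y\<bar> \<le> K * exp ((R+1) * real CARD('d) * (\<Sum>i\<in>UNIV. \<bar>y$i\<bar>))"
proof (intro exI allI impI)
  fix s :: "real^'d" and y :: "real^'m"
  assume sR: "\<forall>l. \<bar>s$l\<bar> \<le> R"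
  define Y where "Y = (\<Sum>i\<in>UNIV. \<bar>y$i\<bar>)"
  have "\<bar>Psi vv U p s y\<bar> = (\<Prod>l\<in>UNIV. \<bar>psi vv (p l) (s$l) ((transpose U *v y)$l)\<bar>)"
    unfolding Psi_def by (simp add: abs_prod)
  also have "\<dots> \<le> (\<Prod>l\<in>UNIV. (fact (p l) * exp (vv * R + sqrt (vv * real (p l)))) * exp ((R+1) * Y))"
  proof (rule prod_mono, intro conjI)
    fix l
    show "0 \<le> \<bar>psi vv (p l) (s$l) ((transpose U *v y)$l)\<bar>" by simp
    have "\<bar>psi vv (p l) (s$l) ((transpose U *v y)$l)\<bar> \<le> (fact (p l) * exp (vv * R + sqrt (vv * real (p l)))) * exp ((R+1) * \<bar>(transpose U *v y)$l\<bar>)"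
      by (rule psi_bound1[OF vv sR[rule_format]])
    also have "\<dots> \<le> (fact (p l) * exp (vv * R + sqrt (vv * real (p l)))) * exp ((R+1) * Y)"
      unfolding Y_def using R z_bound[OF orth, of y l] by (intro mult_left_mono) (auto intro!: mult_left_mono)
    finally show "\<bar>psi vv (p l) (s$l) ((transpose U *v y)$l)\<bar> \<le> (fact (p l) * exp (vv * R + sqrt (vv * real (p l)))) * exp ((R+1) * Y)" .
  qed
  also have "\<dots> = (\<Prod>l\<in>UNIV. fact (p l) * exp (vv * R + sqrt (vv * real (p l)))) * exp ((R+1) * real CARD('d) * Y)"
    by (simp add: prod.distrib exp_of_nat_mult[symmetric] prod_constant ac_simps)
  finally show "\<bar>Psi vv U p s y\<bar> \<le> (\<Prod>l\<in>UNIV. fact (p l) * exp (vv * R + sqrt (vv * real (p l)))) * exp ((R+1) * real CARD('d) * (\<Sum>i\<in>UNIV. \<bar>y$i\<bar>))"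
    unfolding Y_def .
qed

lemma Psi0_eq:
  fixes U :: "real^'d^'m"
  shows "Psi vv U (\<lambda>_. 0) s y = exp (- vv * (s \<bullet> s) / 2) * (\<Prod>i\<in>UNIV. exp ((U *v s)$i * y$i))"
proof -
  have "Psi vv U (\<lambda>_. 0) s y = exp (\<Sum>l\<in>UNIV. s$l * (transpose U *v y)$l - vv * (s$l)\<^sup>2/2)"
    unfolding Psi_def psi_def by (simp add: exp_sum)
  also have "(\<Sum>l\<in>UNIV. s$l * (transpose U *v y)$l - vv * (s$l)\<^sup>2/2) = s \<bullet> (transpose U *v y) - vv * (s \<bullet> s) / 2"
    by (simp add: inner_vec_def sum_subtractf sum_distrib_left sum_divide_distrib power2_eq_square)
  also have "s \<bullet> (transpose U *v y) = (U *v s) \<bullet> y"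
    by (rule inner_Umv[symmetric])
  also have "\<dots> = (\<Sum>i\<in>UNIV. (U *v s)$i * y$i)"
    by (simp add: inner_vec_def)
  finally show ?thesis by (simp add: exp_sum[symmetric] exp_add[symmetric] algebra_simps)
qed

lemma Psi0_int:
  fixes U :: "real^'d^'m"
  assumes orth: "transpose U ** U = mat 1" and sig: "\<sigma> > 0"
  shows "(\<integral>y. Psi (\<sigma>\<^sup>2) U (\<lambda>_. 0) s y \<partial>Gm \<sigma> mv) = exp (s \<bullet> (transpose U *v mv))"
proof -
  define b where "b = U *v s"
  have "(\<integral>y. Psi (\<sigma>\<^sup>2) U (\<lambda>_. 0) s y \<partial>Gm \<sigma> mv) = exp (- \<sigma>\<^sup>2 * (s \<bullet> s) / 2) * (\<integral>y. (\<Prod>i\<in>UNIV. exp (b$i * y$i)) \<partial>Gm \<sigma> mv)"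
    unfolding Psi0_eq b_def by simp
  also have "(\<integral>y. (\<Prod>i\<in>UNIV. exp (b$i * y$i)) \<partial>Gm \<sigma> mv) = (\<Prod>i\<in>UNIV. exp (b$i * mv$i + \<sigma>\<^sup>2 * (b$i)\<^sup>2/2))"
    using Gm_prod(2)[OF sig, of "\<lambda>i t. exp (b$i * t)" mv] normal_exp_int[OF sig] by simp
  also have "\<dots> = exp (b \<bullet> mv + \<sigma>\<^sup>2 * (b \<bullet> b) / 2)"
    by (simp add: exp_sum[symmetric] inner_vec_def sum.distrib sum_distrib_left sum_divide_distrib power2_eq_square)
  also have "b \<bullet> b = s \<bullet> s" unfolding b_def by (rule orth_norm[OF orth])
  also have "b \<bullet> mv = s \<bullet> (transpose U *v mv)" unfolding b_def by (rule inner_Umv)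
  finally show ?thesis by (simp add: exp_add[symmetric] algebra_simps)
qed

lemma Psi_int:
  fixes U :: "real^'d^'m"
  assumes orth: "transpose U ** U = mat 1" and sig: "\<sigma> > 0"
  shows "integrable (Gm \<sigma> mv) (Psi (\<sigma>\<^sup>2) U p s)"
proof -
  define R where "R = (\<Sum>l\<in>UNIV. \<bar>s$l\<bar>)"
  have R0: "R \<ge> 0" unfolding R_def by (simp add: sum_nonneg)
  have sR: "\<forall>l. \<bar>s$l\<bar> \<le> R" unfolding R_def by (auto intro: member_le_sum)
  obtain K where K: "\<And>s y. (\<forall>l. \<bar>s$l\<bar> \<le> R) \<Longrightarrow> \<bar>Psi (\<sigma>\<^sup>2) U p s y\<bar> \<le> K * exp ((R+1) * real CARD('d) * (\<Sum>i\<in>UNIV. \<bar>y$i\<bar>))"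
    using Psi_bound[OF orth _ R0, of "\<sigma>\<^sup>2" p] by auto
  show ?thesis
    by (rule Gm_bound_int[OF sig Psi_meas K]) (use sR in auto)
qed

lemma Psi_split:
  "Psi vv U p s y = psi vv (p l) (s$l) ((transpose U *v y)$l) * (\<Prod>l'\<in>UNIV-{l}. psi vv (p l') (s$l') ((transpose U *v y)$l'))"
  unfolding Psi_def by (subst prod.remove[of UNIV l]) auto

lemma mi_pow_upd: "mi_pow \<mu> (p(l := Suc (p l))) = mi_pow \<mu> p * \<mu>$l"
proof -
  have a: "mi_pow \<mu> q = (\<mu>$l)^(q l) * (\<Prod>l'\<in>UNIV-{l}. (\<mu>$l')^(q l'))" for q
    unfolding mi_pow_def by (subst prod.remove[of UNIV l]) auto
  have b: "(\<Prod>l'\<in>UNIV-{l}. (\<mu>$l')^((p(l := Suc (p l))) l')) = (\<Prod>l'\<in>UNIV-{l}. (\<mu>$l')^(p l'))"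
    by (rule prod.cong) auto
  show ?thesis unfolding a[of "p(l := Suc (p l))"] a[of p] b by simp
qed

lemma Psi_mean_step:
  fixes U :: "real^'d^'m"
  assumes orth: "transpose U ** U = mat 1" and sig: "\<sigma> > 0"
    and IH: "\<And>s. (\<integral>y. Psi (\<sigma>\<^sup>2) U p s y \<partial>Gm \<sigma> mv) = mi_pow (transpose U *v mv) p * exp (s \<bullet> (transpose U *v mv))"
  shows "(\<integral>y. Psi (\<sigma>\<^sup>2) U (p(l := Suc (p l))) s y \<partial>Gm \<sigma> mv) = mi_pow (transpose U *v mv) (p(l := Suc (p l))) * exp (s \<bullet> (transpose U *v mv))"
proof -
  define q where "q = p(l := Suc (p l))"
  define \<mu> where "\<mu> = transpose U *v mv"
  define e where "e = (axis l 1 :: real^'d)"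
  define f where "f t y = Psi (\<sigma>\<^sup>2) U p (s + t *\<^sub>R e) y" for t y
  define f' where "f' t y = Psi (\<sigma>\<^sup>2) U q (s + t *\<^sub>R e) y" for t y
  have comp: "(s + t *\<^sub>R e)$l' = (if l' = l then s$l + t else s$l')" for t l'
    unfolding e_def by (simp add: axis_def)
  define P where "P y = (\<Prod>l'\<in>UNIV-{l}. psi (\<sigma>\<^sup>2) (p l') (s$l') ((transpose U *v y)$l'))" for y
  have fe: "f t y = psi (\<sigma>\<^sup>2) (p l) (s$l + t) ((transpose U *v y)$l) * P y" for t y
    unfolding f_def P_def Psi_split[of _ _ _ _ _ l] comp by (auto intro!: prod.cong)
  have f'e: "f' t y = psi (\<sigma>\<^sup>2) (Suc (p l)) (s$l + t) ((transpose U *v y)$l) * P y" for t y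
    unfolding f'_def P_def Psi_split[of _ _ _ _ _ l] comp q_def by (auto intro!: prod.cong)
  have der: "((\<lambda>t. f t y) has_real_derivative f' t y) (at t)" for t y
  proof -
    have "((\<lambda>t. psi (\<sigma>\<^sup>2) (p l) (s$l + t) ((transpose U *v y)$l)) has_real_derivative
        psi (\<sigma>\<^sup>2) (Suc (p l)) (s$l + t) ((transpose U *v y)$l) * 1) (at t)"
      by (rule DERIV_chain2[OF psi_deriv]) (auto intro!: derivative_eq_intros)
    then have "((\<lambda>t. psi (\<sigma>\<^sup>2) (p l) (s$l + t) ((transpose U *v y)$l) * P y) has_real_derivative
        psi (\<sigma>\<^sup>2) (Suc (p l)) (s$l + t) ((transpose U *v y)$l) * 1 * P y) (at t)"
      by (rule DERIV_cmult_right)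
    then show ?thesis unfolding fe f'e by simp
  qed
  define R where "R = (\<Sum>l\<in>UNIV. \<bar>s$l\<bar>) + 1"
  have R0: "R \<ge> 0" unfolding R_def by (simp add: sum_nonneg add_nonneg_nonneg)
  obtain K where K: "\<And>s y. (\<forall>l. \<bar>s$l\<bar> \<le> R) \<Longrightarrow> \<bar>Psi (\<sigma>\<^sup>2) U q s y\<bar> \<le> K * exp ((R+1) * real CARD('d) * (\<Sum>i\<in>UNIV. \<bar>y$i\<bar>))"
    using Psi_bound[OF orth _ R0, of "\<sigma>\<^sup>2" q] by auto
  have bnd: "\<bar>f' t y\<bar> \<le> K * exp ((R+1) * real CARD('d) * (\<Sum>i\<in>UNIV. \<bar>y$i\<bar>))" if "\<bar>t - 0\<bar> \<le> 1" for t y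
    unfolding f'_def
  proof (rule K, intro allI)
    fix l'
    have "\<bar>s$l'\<bar> \<le> (\<Sum>l\<in>UNIV. \<bar>s$l\<bar>)" by (rule member_le_sum) auto
    then show "\<bar>(s + t *\<^sub>R e)$l'\<bar> \<le> R" unfolding comp R_def using that by auto
  qed
  have D1: "((\<lambda>t. \<integral>y. f t y \<partial>Gm \<sigma> mv) has_real_derivative (\<integral>y. f' 0 y \<partial>Gm \<sigma> mv)) (at 0)"
  proof (rule DUI[OF _ _ der _ bnd])
    show "integrable (Gm \<sigma> mv) (f t)" for t unfolding f_def by (rule Psi_int[OF orth sig])
    show "f' 0 \<in> borel_measurable (Gm \<sigma> mv)" unfolding f'_def Gm_def using Psi_meas by simp
    show "integrable (Gm \<sigma> mv) (\<lambda>y. K * exp ((R+1) * real CARD('d) * (\<Sum>i\<in>UNIV. \<bar>y$i\<bar>)))"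
      using Gm_dom_int[OF sig, of mv "(R+1) * real CARD('d)"] by simp
  qed
  have Feq: "(\<lambda>t. \<integral>y. f t y \<partial>Gm \<sigma> mv) = (\<lambda>t. mi_pow \<mu> p * exp (s \<bullet> \<mu> + t * \<mu>$l))"
  proof
    fix t
    have "(s + t *\<^sub>R e) \<bullet> \<mu> = s \<bullet> \<mu> + t * \<mu>$l"
      unfolding e_def by (simp add: inner_add_left inner_commute[of "axis l 1"] inner_axis)
    then show "(\<integral>y. f t y \<partial>Gm \<sigma> mv) = mi_pow \<mu> p * exp (s \<bullet> \<mu> + t * \<mu>$l)"
      unfolding f_def \<mu>_def IH by simp
  qed
  have D2: "((\<lambda>t. mi_pow \<mu> p * exp (s \<bullet> \<mu> + t * \<mu>$l)) has_real_derivative (mi_pow \<mu> p * (exp (s \<bullet> \<mu>) * \<mu>$l))) (at 0)"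
    by (auto intro!: derivative_eq_intros)
  have "(\<integral>y. f' 0 y \<partial>Gm \<sigma> mv) = mi_pow \<mu> p * (exp (s \<bullet> \<mu>) * \<mu>$l)"
    using DERIV_unique[OF D1[unfolded Feq] D2] .
  then show ?thesis unfolding f'_def q_def[symmetric] \<mu>_def[symmetric] mi_pow_upd[of \<mu> p l, folded q_def]
    by simp
qed

lemma infsum_nat_suminf:
  fixes f :: "nat \<Rightarrow> real"
  assumes "f summable_on UNIV"
  shows "infsum f UNIV = suminf f"
  using has_sum_imp_sums[OF has_sum_infsum[OF assms]] by (simp add: sums_iff)

lemma prod_summable:
  fixes f :: "'d::finite \<Rightarrow> nat \<Rightarrow> real"
  assumes nn: "\<And>l n. f l n \<ge> 0" and sm: "\<And>l. summable (f l)"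
  shows "(\<lambda>p. \<Prod>l\<in>UNIV. f l (p l)) summable_on UNIV"
    and "(\<Sum>\<^sub>\<infinity>p. \<Prod>l\<in>UNIV. f l (p l)) = (\<Prod>l\<in>UNIV. suminf (f l))"
proof -
  have s1: "f l summable_on UNIV" for l using summable_on_UNIV_nonneg_real_iff[of "f l"] nn sm by auto
  have s2: "(\<lambda>x. norm (f l x)) summable_on UNIV" for l using s1 nn by simp
  have s3: "Infinite_Set_Sum.abs_summable_on (f l) UNIV" for l using s2 abs_summable_equivalent by blast
  have "Infinite_Set_Sum.abs_summable_on (\<lambda>g. \<Prod>l\<in>UNIV. f l (g l)) (PiE UNIV (\<lambda>_. UNIV))"
    by (rule abs_summable_on_prod_PiE) (auto intro: s3)
  then have "(\<lambda>g. norm (\<Prod>l\<in>UNIV. f l (g l))) summable_on UNIV"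
    using abs_summable_equivalent[of "\<lambda>g. \<Prod>l\<in>UNIV. f l (g l)" UNIV] by (simp add: PiE_UNIV_domain)
  then show sp: "(\<lambda>p. \<Prod>l\<in>UNIV. f l (p l)) summable_on UNIV"
    by (rule abs_summable_summable)
  have "(\<Sum>\<^sub>\<infinity>p\<in>PiE UNIV (\<lambda>_. UNIV). \<Prod>l\<in>UNIV. f l (p l)) = (\<Prod>l\<in>UNIV. infsum (f l) UNIV)"
    by (rule infsum_prod_PiE) (use s1 sp in \<open>auto simp: PiE_UNIV_domain\<close>)
  then show "(\<Sum>\<^sub>\<infinity>p. \<Prod>l\<in>UNIV. f l (p l)) = (\<Prod>l\<in>UNIV. suminf (f l))"
    by (simp add: PiE_UNIV_domain infsum_nat_suminf[OF s1])
qed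

lemma Psi_mean:
  fixes U :: "real^'d^'m"
  assumes orth: "transpose U ** U = mat 1" and sig: "\<sigma> > 0"
  shows "(\<integral>y. Psi (\<sigma>\<^sup>2) U p s y \<partial>Gm \<sigma> mv) = mi_pow (transpose U *v mv) p * exp (s \<bullet> (transpose U *v mv))"
proof -
  have "\<forall>p s. (\<Sum>l\<in>UNIV. p l) = n \<longrightarrow> (\<integral>y. Psi (\<sigma>\<^sup>2) U p s y \<partial>Gm \<sigma> mv) = mi_pow (transpose U *v mv) p * exp (s \<bullet> (transpose U *v mv))" for n
  proof (induction n)
    case 0
    show ?case
    proof (intro allI impI)
      fix p :: "'d \<Rightarrow> nat" and s
      assume "(\<Sum>l\<in>UNIV. p l) = 0"
      then have "p = (\<lambda>_. 0)" by (auto simp: fun_eq_iff)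
      then show "(\<integral>y. Psi (\<sigma>\<^sup>2) U p s y \<partial>Gm \<sigma> mv) = mi_pow (transpose U *v mv) p * exp (s \<bullet> (transpose U *v mv))"
        using Psi0_int[OF orth sig, where s=s and mv=mv] by (simp add: mi_pow_def)
    qed
  next
    case (Suc n)
    show ?case
    proof (intro allI impI)
      fix p :: "'d \<Rightarrow> nat" and s
      assume ps: "(\<Sum>l\<in>UNIV. p l) = Suc n"
      then obtain l where l: "p l > 0"
        by (metis gr0I sum.neutral nat.simps(3))
      define p' where "p' = p(l := p l - 1)"
      have pp: "p = p'(l := Suc (p' l))" unfolding p'_def using l by (auto simp: fun_eq_iff)
      have "(\<Sum>l\<in>UNIV. p l) = p l + (\<Sum>l'\<in>UNIV-{l}. p l')" by (subst sum.remove[of UNIV l]) auto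
      moreover have "(\<Sum>l\<in>UNIV. p' l) = p' l + (\<Sum>l'\<in>UNIV-{l}. p' l')" by (subst sum.remove[of UNIV l]) auto
      moreover have "(\<Sum>l'\<in>UNIV-{l}. p' l') = (\<Sum>l'\<in>UNIV-{l}. p l')" unfolding p'_def by (rule sum.cong) auto
      ultimately have "(\<Sum>l\<in>UNIV. p' l) = n" using ps l unfolding p'_def by simp
      then have IH: "\<And>s. (\<integral>y. Psi (\<sigma>\<^sup>2) U p' s y \<partial>Gm \<sigma> mv) = mi_pow (transpose U *v mv) p' * exp (s \<bullet> (transpose U *v mv))"
        using Suc.IH by blast
      show "(\<integral>y. Psi (\<sigma>\<^sup>2) U p s y \<partial>Gm \<sigma> mv) = mi_pow (transpose U *v mv) p * exp (s \<bullet> (transpose U *v mv))"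
        unfolding pp by (rule Psi_mean_step[OF orth sig IH])
    qed
  qed
  then show ?thesis by blast
qed

lemma infinite_fun_nat: "infinite (UNIV :: ('d::finite \<Rightarrow> nat) set)"
proof
  assume "finite (UNIV :: ('d \<Rightarrow> nat) set)"
  then have "finite (range (\<lambda>n::nat. (\<lambda>_::'d. n)))" by (rule finite_subset[rotated]) auto
  moreover have "inj (\<lambda>n::nat. (\<lambda>_::'d. n))" by (auto simp: inj_on_def fun_eq_iff)
  ultimately have "finite (UNIV :: nat set)" using finite_imageD by blast
  then show False by simp
qed

lemma bij_en: "bij_betw (from_nat_into (UNIV :: ('d::finite \<Rightarrow> nat) set)) UNIV UNIV"
  by (rule bij_betw_from_nat_into[OF countableI_type infinite_fun_nat])

lemma coef_bound:
  fixes a :: "('d::finite \<Rightarrow> nat) \<Rightarrow> real"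
  assumes sig: "\<sigma> > 0" and C: "C \<ge> 0" and ab: "\<bar>a p\<bar> \<le> C ^ mi_abs p"
  shows "\<bar>a p / mi_fact p / \<sigma> ^ mi_abs p\<bar> \<le> (\<Prod>l\<in>UNIV. (C/\<sigma>) ^ p l / fact (p l))"
proof -
  have mf: "mi_fact p > 0" unfolding mi_fact_def by (simp add: prod_pos)
  have "\<bar>a p / mi_fact p / \<sigma> ^ mi_abs p\<bar> = \<bar>a p\<bar> / (mi_fact p * \<sigma> ^ mi_abs p)"
    using mf sig by (simp add: abs_divide abs_mult)
  also have "\<dots> \<le> C ^ mi_abs p / (mi_fact p * \<sigma> ^ mi_abs p)"
    using mf sig ab by (intro divide_right_mono) auto
  also have "\<dots> = (\<Prod>l\<in>UNIV. (C/\<sigma>) ^ p l / fact (p l))"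
    unfolding mi_abs_def mi_fact_def
    by (simp add: power_sum prod_dividef prod.distrib[symmetric] power_divide field_simps)
  finally show ?thesis .
qed

lemma mi_pow_scale:
  fixes \<mu> :: "real^'d::finite"
  shows "mi_pow ((1/\<sigma>) *\<^sub>R \<mu>) p = mi_pow \<mu> p / \<sigma> ^ mi_abs p"
  unfolding mi_pow_def mi_abs_def
  by (simp add: power_sum prod_dividef power_divide field_simps)

lemma main_est:
  fixes U :: "real^'d::finite^'m::finite" and a :: "('d \<Rightarrow> nat) \<Rightarrow> real" and x1 :: "real^'d"
  assumes orth: "transpose U ** U = mat 1" and sig: "\<sigma> > 0" and C: "C \<ge> 0"
    and ab: "\<And>p. \<bar>a p\<bar> \<le> C ^ mi_abs p"
  shows "\<exists>g. g \<in> borel_measurable borel \<and> (\<forall>mv. integrable (Gm \<sigma> mv) g \<and>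
     (\<forall>r. integrable (Gm \<sigma> mv) (\<lambda>y. (g y - r)\<^sup>2)) \<and>
     (\<integral>y. g y \<partial>Gm \<sigma> mv) = exp (x1 \<bullet> (transpose U *v mv)) *
        (\<Sum>\<^sub>\<infinity>p. a p / mi_fact p * mi_pow ((1/\<sigma>) *\<^sub>R (transpose U *v mv)) p))"
proof -
  define vv where "vv = \<sigma>\<^sup>2"
  have vv0: "vv \<ge> 0" unfolding vv_def by simp
  define C' where "C' = C / \<sigma>"
  have C'0: "C' \<ge> 0" unfolding C'_def using C sig by simp
  define c where "c p = a p / mi_fact p / \<sigma> ^ mi_abs p" for p
  define F where "F p y = c p * Psi vv U p x1 y" for p y
  define h where "h l n y = C' ^ n / fact n * \<bar>psi vv n (x1$l) ((transpose U *v y)$l)\<bar>" for l n y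
  define K where "K = (\<Prod>l\<in>UNIV. exp (2 * C' * vv * \<bar>x1$l\<bar>) + K0 vv C')"
  define B0 where "B0 = (\<Sum>l\<in>UNIV. \<bar>x1$l\<bar> + 2 * C')"
  have B00: "B0 \<ge> 0" unfolding B0_def using C'0 by (simp add: sum_nonneg)
  define G where "G y = K * exp (B0 * (\<Sum>i\<in>UNIV. \<bar>y$i\<bar>))" for y :: "real^'m"
  have h0: "h l n y \<ge> 0" for l n y unfolding h_def using C'0 by simp
  have hs: "summable (\<lambda>n. h l n y)" for l y unfolding h_def by (rule psi_series(1)[OF vv0 C'0])
  have Fb: "\<bar>F p y\<bar> \<le> (\<Prod>l\<in>UNIV. h l (p l) y)" for p y
  proof -
    have "\<bar>F p y\<bar> = \<bar>c p\<bar> * (\<Prod>l\<in>UNIV. \<bar>psi vv (p l) (x1$l) ((transpose U *v y)$l)\<bar>)"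
      unfolding F_def Psi_def by (simp add: abs_mult abs_prod)
    also have "\<dots> \<le> (\<Prod>l\<in>UNIV. C' ^ p l / fact (p l)) * (\<Prod>l\<in>UNIV. \<bar>psi vv (p l) (x1$l) ((transpose U *v y)$l)\<bar>)"
      unfolding c_def C'_def by (intro mult_right_mono coef_bound[OF sig C ab]) (simp add: prod_nonneg)
    also have "\<dots> = (\<Prod>l\<in>UNIV. h l (p l) y)" unfolding h_def by (rule prod.distrib[symmetric])
    finally show ?thesis .
  qed
  have Hs: "(\<lambda>p. \<Prod>l\<in>UNIV. h l (p l) y) summable_on UNIV" for y
    by (rule prod_summable(1)) (use h0 hs in auto)
  have HG: "(\<Sum>\<^sub>\<infinity>p. \<Prod>l\<in>UNIV. h l (p l) y) \<le> G y" for y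
  proof -
    define Y where "Y = (\<Sum>i\<in>UNIV. \<bar>y$i\<bar>)"
    have "(\<Sum>\<^sub>\<infinity>p. \<Prod>l\<in>UNIV. h l (p l) y) = (\<Prod>l\<in>UNIV. \<Sum>n. h l n y)"
      by (rule prod_summable(2)) (use h0 hs in auto)
    also have "\<dots> \<le> (\<Prod>l\<in>UNIV. (exp (2 * C' * vv * \<bar>x1$l\<bar>) + K0 vv C') * exp ((\<bar>x1$l\<bar> + 2 * C') * Y))"
    proof (rule prod_mono, intro conjI)
      fix l
      show sn0: "0 \<le> (\<Sum>n. h l n y)" by (rule suminf_nonneg[OF hs h0])
      have sle: "(\<Sum>n. h l n y) \<le> (exp (2 * C' * vv * \<bar>x1$l\<bar>) + K0 vv C') * exp ((\<bar>x1$l\<bar> + 2 * C') * \<bar>(transpose U *v y)$l\<bar>)"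
        unfolding h_def by (rule psi_series(2)[OF vv0 C'0])
      note sle
      also have "(exp (2 * C' * vv * \<bar>x1$l\<bar>) + K0 vv C') * exp ((\<bar>x1$l\<bar> + 2 * C') * \<bar>(transpose U *v y)$l\<bar>) \<le> (exp (2 * C' * vv * \<bar>x1$l\<bar>) + K0 vv C') * exp ((\<bar>x1$l\<bar> + 2 * C') * Y)"
      proof (rule mult_left_mono)
        show "exp ((\<bar>x1$l\<bar> + 2 * C') * \<bar>(transpose U *v y)$l\<bar>) \<le> exp ((\<bar>x1$l\<bar> + 2 * C') * Y)"
          unfolding Y_def using z_bound[OF orth, of y l] C'0 by (simp add: mult_left_mono)
        show "0 \<le> exp (2 * C' * vv * \<bar>x1$l\<bar>) + K0 vv C'"
        proof -
          have "0 \<le> (exp (2 * C' * vv * \<bar>x1$l\<bar>) + K0 vv C') * exp ((\<bar>x1$l\<bar> + 2 * C') * \<bar>(transpose U *v y)$l\<bar>)"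
            using sn0 sle by linarith
          then show ?thesis by (simp add: zero_le_mult_iff)
        qed
      qed
      finally show "(\<Sum>n. h l n y) \<le> (exp (2 * C' * vv * \<bar>x1$l\<bar>) + K0 vv C') * exp ((\<bar>x1$l\<bar> + 2 * C') * Y)" .
    qed
    also have "\<dots> = G y"
      unfolding G_def K_def B0_def Y_def by (simp add: prod.distrib exp_sum[symmetric] sum_distrib_right)
    finally show ?thesis .
  qed
  have Fas: "(\<lambda>p. \<bar>F p y\<bar>) summable_on UNIV" for y
  proof (rule summable_on_comparison_test[where f="\<lambda>p. \<Prod>l\<in>UNIV. h l (p l) y"])
    show "(\<lambda>p. \<Prod>l\<in>UNIV. h l (p l) y) summable_on UNIV" by (rule Hs)
    show "\<bar>F p y\<bar> \<le> (\<Prod>l\<in>UNIV. h l (p l) y)" if "p \<in> UNIV" for p by (rule Fb)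
    show "0 \<le> \<bar>F p y\<bar>" if "p \<in> UNIV" for p by simp
  qed
  have Fs: "(\<lambda>p. F p y) summable_on UNIV" for y
  proof -
    have "(\<lambda>p. norm (F p y)) summable_on UNIV" using Fas[of y] by simp
    then show ?thesis by (rule abs_summable_summable)
  qed
  define g where "g y = (\<Sum>\<^sub>\<infinity>p. F p y)" for y
  have gG: "\<bar>g y\<bar> \<le> G y" for y
  proof -
    have "\<bar>g y\<bar> \<le> (\<Sum>\<^sub>\<infinity>p. \<bar>F p y\<bar>)" unfolding g_def
      using norm_infsum_bound[of "\<lambda>p. F p y" UNIV] Fas by simp
    also have "\<dots> \<le> (\<Sum>\<^sub>\<infinity>p. \<Prod>l\<in>UNIV. h l (p l) y)"
      by (rule infsum_mono[OF Fas Hs]) (use Fb in auto)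
    finally show ?thesis using HG[of y] by linarith
  qed
  have K0': "K \<ge> 0"
  proof -
    have "0 \<le> G 0" using gG[of 0] by linarith
    then show ?thesis unfolding G_def by (simp add: zero_le_mult_iff)
  qed
  define en where "en = from_nat_into (UNIV :: ('d \<Rightarrow> nat) set)"
  have en: "bij_betw en UNIV UNIV" unfolding en_def by (rule bij_en)
  have sums_g: "(\<lambda>n. F (en n) y) sums g y" for y
  proof -
    have "(\<lambda>n. F (en n) y) summable_on UNIV" using Fs[of y] summable_on_reindex_bij_betw[OF en, where f="\<lambda>p. F p y"] by simp
    moreover have "infsum (\<lambda>n. F (en n) y) UNIV = g y" unfolding g_def by (rule infsum_reindex_bij_betw[OF en, where f="\<lambda>p. F p y"])
    ultimately have "((\<lambda>n. F (en n) y) has_sum g y) UNIV" using has_sum_infsum by fastforce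
    then show ?thesis by (rule has_sum_imp_sums)
  qed
  define s where "s N y = (\<Sum>n<N. F (en n) y)" for N y
  have sm: "s N \<in> borel_measurable borel" for N
    unfolding s_def F_def by (intro borel_measurable_sum borel_measurable_times borel_measurable_const Psi_meas)
  have slim: "(\<lambda>N. s N y) \<longlonglongrightarrow> g y" for y using sums_g[of y] unfolding sums_def s_def .
  have gm: "g \<in> borel_measurable borel"
    by (rule borel_measurable_LIMSEQ_real[OF slim sm])
  have sG: "\<bar>s N y\<bar> \<le> G y" for N y
  proof -
    have inj: "inj_on en {..<N}" using en unfolding bij_betw_def by (auto intro: inj_on_subset)
    have "\<bar>s N y\<bar> \<le> (\<Sum>n<N. \<bar>F (en n) y\<bar>)" unfolding s_def by (rule sum_abs)
    also have "\<dots> = (\<Sum>p\<in>en ` {..<N}. \<bar>F p y\<bar>)" by (simp add: sum.reindex[OF inj])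
    also have "\<dots> \<le> (\<Sum>\<^sub>\<infinity>p. \<bar>F p y\<bar>)" by (rule finite_sum_le_infsum[OF Fas]) auto
    also have "\<dots> \<le> (\<Sum>\<^sub>\<infinity>p. \<Prod>l\<in>UNIV. h l (p l) y)"
      by (rule infsum_mono[OF Fas Hs]) (use Fb in auto)
    finally show ?thesis using HG[of y] by linarith
  qed
  show ?thesis
  proof (intro exI conjI allI)
    show "g \<in> borel_measurable borel" by (rule gm)
    fix mv :: "real^'m"
    define \<mu> where "\<mu> = transpose U *v mv"
    have Gint: "integrable (Gm \<sigma> mv) G" unfolding G_def using Gm_dom_int[OF sig, of mv B0] by simp
    show gint: "integrable (Gm \<sigma> mv) g"
      by (rule Gm_bound_int[OF sig gm, of K B0]) (use gG in \<open>auto simp: G_def\<close>)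
    show "integrable (Gm \<sigma> mv) (\<lambda>y. (g y - r)\<^sup>2)" for r
    proof (rule Gm_bound_int[OF sig, of _ "2 * K\<^sup>2 + 2 * r\<^sup>2" "2 * B0"])
      show "(\<lambda>y. (g y - r)\<^sup>2) \<in> borel_measurable borel" using gm by measurable
      fix y :: "real^'m"
      define E where "E = exp (B0 * (\<Sum>i\<in>UNIV. \<bar>y$i\<bar>))"
      have E1: "E \<ge> 1" unfolding E_def using B00 by (simp add: sum_nonneg)
      have "\<bar>g y\<bar> \<le> K * E" using gG[of y] unfolding G_def E_def .
      then have "(g y)\<^sup>2 \<le> (K * E)\<^sup>2" using power_mono[OF _ abs_ge_zero, of "g y" "K * E" 2] by simp
      moreover have "(g y - r)\<^sup>2 + (g y + r)\<^sup>2 = 2 * (g y)\<^sup>2 + 2 * r\<^sup>2"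
        by (simp add: power2_eq_square algebra_simps)
      moreover have "(g y + r)\<^sup>2 \<ge> 0" by simp
      ultimately have "(g y - r)\<^sup>2 \<le> 2 * (K * E)\<^sup>2 + 2 * r\<^sup>2" by linarith
      then have "\<bar>(g y - r)\<^sup>2\<bar> \<le> 2 * (K * E)\<^sup>2 + 2 * r\<^sup>2" by simp
      also have "\<dots> \<le> (2 * K\<^sup>2 + 2 * r\<^sup>2) * E\<^sup>2"
      proof -
        have "1 \<le> E\<^sup>2" using E1 by (simp add: one_le_power)
        then have "2 * r\<^sup>2 * 1 \<le> 2 * r\<^sup>2 * E\<^sup>2" by (intro mult_left_mono) auto
        then show ?thesis by (simp add: power_mult_distrib algebra_simps)
      qed
      also have "E\<^sup>2 = exp (2 * B0 * (\<Sum>i\<in>UNIV. \<bar>y$i\<bar>))" unfolding E_def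
        by (simp add: power2_eq_square exp_add[symmetric])
      finally show "\<bar>(g y - r)\<^sup>2\<bar> \<le> (2 * K\<^sup>2 + 2 * r\<^sup>2) * exp (2 * B0 * (\<Sum>i\<in>UNIV. \<bar>y$i\<bar>))" .
    qed
    define d where "d p = c p * mi_pow \<mu> p * exp (x1 \<bullet> \<mu>)" for p
    have ds: "d summable_on UNIV"
    proof -
      have "(\<lambda>p. \<Prod>l\<in>UNIV. (C' * \<bar>\<mu>$l\<bar>) ^ p l / fact (p l)) summable_on UNIV"
        by (rule prod_summable(1)) (use C'0 summable_exp in \<open>auto simp: divide_inverse_commute\<close>)
      then have "(\<lambda>p. exp (x1 \<bullet> \<mu>) * (\<Prod>l\<in>UNIV. (C' * \<bar>\<mu>$l\<bar>) ^ p l / fact (p l))) summable_on UNIV"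
        by (rule summable_on_cmult_right)
      then have "(\<lambda>p. \<bar>d p\<bar>) summable_on UNIV"
      proof (rule summable_on_comparison_test)
        fix p
        have "\<bar>d p\<bar> = \<bar>c p\<bar> * \<bar>mi_pow \<mu> p\<bar> * exp (x1 \<bullet> \<mu>)" unfolding d_def by (simp add: abs_mult)
        also have "\<dots> \<le> (\<Prod>l\<in>UNIV. C' ^ p l / fact (p l)) * (\<Prod>l\<in>UNIV. \<bar>\<mu>$l\<bar> ^ p l) * exp (x1 \<bullet> \<mu>)"
          unfolding c_def C'_def mi_pow_def
          by (intro mult_right_mono mult_mono coef_bound[OF sig C ab]) (use C sig in \<open>auto simp: abs_prod power_abs intro!: prod_nonneg\<close>)
        also have "\<dots> = exp (x1 \<bullet> \<mu>) * (\<Prod>l\<in>UNIV. (C' * \<bar>\<mu>$l\<bar>) ^ p l / fact (p l))"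
          by (simp add: prod.distrib[symmetric] power_mult_distrib)
        finally show "\<bar>d p\<bar> \<le> exp (x1 \<bullet> \<mu>) * (\<Prod>l\<in>UNIV. (C' * \<bar>\<mu>$l\<bar>) ^ p l / fact (p l))" .
      qed simp
      then have "(\<lambda>p. norm (d p)) summable_on UNIV" by simp
      then show ?thesis by (rule abs_summable_summable)
    qed
    have dT: "(\<Sum>\<^sub>\<infinity>p. d p) = exp (x1 \<bullet> \<mu>) * (\<Sum>\<^sub>\<infinity>p. a p / mi_fact p * mi_pow ((1/\<sigma>) *\<^sub>R \<mu>) p)"
    proof -
      have "d p = exp (x1 \<bullet> \<mu>) * (a p / mi_fact p * mi_pow ((1/\<sigma>) *\<^sub>R \<mu>) p)" for p
        unfolding d_def c_def mi_pow_scale by simp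
      then have e: "d = (\<lambda>p. exp (x1 \<bullet> \<mu>) * (a p / mi_fact p * mi_pow ((1/\<sigma>) *\<^sub>R \<mu>) p))" by (rule ext)
      show ?thesis unfolding e by (rule infsum_cmult_right')
    qed
    have dsums: "(\<lambda>n. d (en n)) sums (\<Sum>\<^sub>\<infinity>p. d p)"
    proof -
      have "(\<lambda>n. d (en n)) summable_on UNIV" using ds summable_on_reindex_bij_betw[OF en, where f=d] by simp
      moreover have "infsum (\<lambda>n. d (en n)) UNIV = (\<Sum>\<^sub>\<infinity>p. d p)" by (rule infsum_reindex_bij_betw[OF en, where f=d])
      ultimately have "((\<lambda>n. d (en n)) has_sum (\<Sum>\<^sub>\<infinity>p. d p)) UNIV" using has_sum_infsum by fastforce
      then show ?thesis by (rule has_sum_imp_sums)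
    qed
    have Fint: "integrable (Gm \<sigma> mv) (F p)" for p
      unfolding F_def vv_def using Psi_int[OF orth sig] by simp
    have Fmean: "(\<integral>y. F p y \<partial>Gm \<sigma> mv) = d p" for p
      unfolding F_def d_def vv_def \<mu>_def using Psi_mean[OF orth sig] by simp
    have sint: "(\<integral>y. s N y \<partial>Gm \<sigma> mv) = (\<Sum>n<N. d (en n))" for N
      unfolding s_def using Fint by (simp add: integral_sum Fmean)
    have "(\<lambda>N. \<integral>y. s N y \<partial>Gm \<sigma> mv) \<longlonglongrightarrow> (\<integral>y. g y \<partial>Gm \<sigma> mv)"
    proof (rule integral_dominated_convergence[where w=G])
      show "g \<in> borel_measurable (Gm \<sigma> mv)" using gm unfolding Gm_def by simp
      show "s N \<in> borel_measurable (Gm \<sigma> mv)" for N using sm unfolding Gm_def by simp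
      show "integrable (Gm \<sigma> mv) G" by (rule Gint)
      show "AE y in Gm \<sigma> mv. (\<lambda>N. s N y) \<longlonglongrightarrow> g y" using slim by simp
      show "AE y in Gm \<sigma> mv. norm (s N y) \<le> G y" for N using sG by simp
    qed
    moreover have "(\<lambda>N. \<integral>y. s N y \<partial>Gm \<sigma> mv) \<longlonglongrightarrow> (\<Sum>\<^sub>\<infinity>p. d p)"
      using dsums unfolding sums_def sint .
    ultimately have "(\<integral>y. g y \<partial>Gm \<sigma> mv) = (\<Sum>\<^sub>\<infinity>p. d p)" by (rule LIMSEQ_unique)
    then show "(\<integral>y. g y \<partial>Gm \<sigma> mv) = exp (x1 \<bullet> (transpose U *v mv)) *
        (\<Sum>\<^sub>\<infinity>p. a p / mi_fact p * mi_pow ((1/\<sigma>) *\<^sub>R (transpose U *v mv)) p)"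
      unfolding dT \<mu>_def .
  qed
qed

lemma matrix_inv_eq:
  fixes A :: "real^'n^'n" and B :: "real^'n^'n"
  assumes "A ** B = mat 1" "B ** A = mat 1"
  shows "matrix_inv A = B"
proof -
  define X where "X = matrix_inv A"
  have "A ** X = mat 1 \<and> X ** A = mat 1"
    unfolding X_def matrix_inv_def by (rule someI[of _ B]) (use assms in auto)
  then have "X ** A = mat 1" by simp
  then have "X = X ** (A ** B)" using assms by simp
  also have "\<dots> = (X ** A) ** B" by (simp add: matrix_mul_assoc)
  also have "\<dots> = B" using \<open>X ** A = mat 1\<close> by simp
  finally show ?thesis unfolding X_def .
qed

lemma pinv_unique:
  fixes A :: "real^'n^'m"
  assumes X: "is_pinv A X" and Y: "is_pinv A Y"
  shows "X = Y"
proof -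
  have X1: "A ** X ** A = A" and X2: "X ** A ** X = X" and X3: "transpose (A ** X) = A ** X"
    and X4: "transpose (X ** A) = X ** A" using X unfolding is_pinv_def by auto
  have Y1: "A ** Y ** A = A" and Y2: "Y ** A ** Y = Y" and Y3: "transpose (A ** Y) = A ** Y"
    and Y4: "transpose (Y ** A) = Y ** A" using Y unfolding is_pinv_def by auto
  have AXY: "A ** X = A ** Y"
  proof -
    have "A ** X = transpose (A ** X)" using X3 by simp
    also have "\<dots> = transpose ((A ** Y ** A) ** X)" using Y1 by simp
    also have "\<dots> = transpose ((A ** Y) ** (A ** X))" by (simp add: matrix_mul_assoc)
    also have "\<dots> = transpose (A ** X) ** transpose (A ** Y)" by (simp add: matrix_transpose_mul)
    also have "\<dots> = (A ** X) ** (A ** Y)" using X3 Y3 by simp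
    also have "\<dots> = (A ** X ** A) ** Y" by (simp add: matrix_mul_assoc)
    also have "\<dots> = A ** Y" using X1 by simp
    finally show ?thesis .
  qed
  have XAY: "X ** A = Y ** A"
  proof -
    have "X ** A = transpose (X ** A)" using X4 by simp
    also have "\<dots> = transpose (X ** (A ** Y ** A))" using Y1 by simp
    also have "\<dots> = transpose ((X ** A) ** (Y ** A))" by (simp add: matrix_mul_assoc)
    also have "\<dots> = transpose (Y ** A) ** transpose (X ** A)" by (simp add: matrix_transpose_mul)
    also have "\<dots> = (Y ** A) ** (X ** A)" using X4 Y4 by simp
    also have "\<dots> = Y ** (A ** X ** A)" by (simp add: matrix_mul_assoc)
    also have "\<dots> = Y ** A" using X1 by simp
    finally show ?thesis .
  qed
  have "X = X ** A ** X" using X2 by simp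
  also have "\<dots> = (Y ** A) ** X" using XAY by simp
  also have "\<dots> = Y ** (A ** X)" by (simp add: matrix_mul_assoc)
  also have "\<dots> = Y ** (A ** Y)" using AXY by simp
  also have "\<dots> = Y" using Y2 by (simp add: matrix_mul_assoc)
  finally show ?thesis .
qed

lemma pinv_eq: "is_pinv A X \<Longrightarrow> pinv A = X"
  unfolding pinv_def by (rule the_equality) (auto intro: pinv_unique)

lemma pinv_id: "pinv ((mat 1 :: real^'n^'n) ** matrix_inv (mat 1 :: real^'n^'n)) = mat 1"
proof -
  have "matrix_inv (mat 1 :: real^'n^'n) = mat 1" by (rule matrix_inv_eq) simp_all
  moreover have "is_pinv (mat 1 :: real^'n^'n) (mat 1)" unfolding is_pinv_def by simp
  ultimately show ?thesis by (simp add: pinv_eq)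
qed

lemma pinv_svd:
  fixes H :: "real^'n^'m" and U :: "real^'d^'m" and V :: "real^'d^'n" and Sig :: "real^'d^'d"
  assumes U_orth: "transpose U ** U = mat 1"
    and V_orth: "transpose V ** V = mat 1"
    and Sig_diag: "\<And>i j. i \<noteq> j \<Longrightarrow> Sig $ i $ j = 0"
    and Sig_pos: "\<And>i. Sig $ i $ i > 0"
    and svd: "H = U ** Sig ** transpose V"
  shows "pinv (V ** matrix_inv Sig) *v x = transpose U *v (H *v x)"
proof -
  define Si :: "real^'d^'d" where "Si = (\<chi> i j. if i = j then 1 / Sig$i$i else 0)"
  have md: "\<And>(a::real) P b. a * (if P then b else 0) = (if P then a * b else 0)" by simp
  have md2: "\<And>(a::real) P b. (if P then b else 0) * a = (if P then b * a else 0)" by simp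
  have e1: "(Sig ** Si)$i$j = Sig$i$j / Sig$j$j" for i j
    unfolding matrix_matrix_mult_def Si_def by (simp add: md sum.delta')
  have e2: "(Si ** Sig)$i$j = Sig$i$j / Sig$i$i" for i j
    unfolding matrix_matrix_mult_def Si_def by (simp add: md2 sum.delta)
  have SSi: "Sig ** Si = mat 1"
  unfolding vec_eq_iff proof (intro allI)
    fix i j
    show "(Sig ** Si)$i$j = mat 1$i$j" unfolding e1 mat_def
      using Sig_pos[of j] Sig_diag[of i j] by (cases "i = j") auto
  qed
  have SiS: "Si ** Sig = mat 1"
  unfolding vec_eq_iff proof (intro allI)
    fix i j
    show "(Si ** Sig)$i$j = mat 1$i$j" unfolding e2 mat_def
      using Sig_pos[of i] Sig_diag[of i j] by (cases "i = j") auto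
  qed
  have mi: "matrix_inv Sig = Si" by (rule matrix_inv_eq[OF SSi SiS])
  define A where "A = V ** Si"
  define X where "X = Sig ** transpose V"
  have XA: "X ** A = mat 1"
  proof -
    have "X ** A = Sig ** ((transpose V ** V) ** Si)" unfolding X_def A_def by (simp add: matrix_mul_assoc)
    also have "\<dots> = mat 1" using V_orth SSi by simp
    finally show ?thesis .
  qed
  have AX: "A ** X = V ** transpose V"
  proof -
    have "A ** X = V ** ((Si ** Sig) ** transpose V)" unfolding X_def A_def by (simp add: matrix_mul_assoc)
    also have "\<dots> = V ** transpose V" using SiS by simp
    finally show ?thesis .
  qed
  have "is_pinv A X" unfolding is_pinv_def
  proof (intro conjI)
    have "A ** X ** A = A ** (X ** A)" by (simp add: matrix_mul_assoc)
    then show "A ** X ** A = A" using XA by simp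
    show "X ** A ** X = X" using XA by simp
    show "transpose (A ** X) = A ** X" unfolding AX by (simp add: matrix_transpose_mul)
    show "transpose (X ** A) = X ** A" unfolding XA by simp
  qed
  then have "pinv (V ** matrix_inv Sig) = X" unfolding mi A_def[symmetric] by (rule pinv_eq)
  moreover have "transpose U ** H = X"
    unfolding svd X_def by (simp add: matrix_mul_assoc U_orth)
  ultimately show ?thesis by (simp add: matrix_vector_mul_assoc)
qed

lemma cbias_id_zero:
  fixes x :: "real^'n::finite" and k :: 'n
  assumes sig: "\<sigma> > 0"
  shows "cbias (pinv ((mat 1 :: real^'n^'n) ** matrix_inv (mat 1 :: real^'n^'n))) \<sigma> 0
              (\<lambda>p. if p = (\<lambda>l. if l = k then 1 else 0) then \<sigma> else 0) k x = 0"
proof -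
  define e :: "'n \<Rightarrow> nat" where "e = (\<lambda>l. if l = k then 1 else 0)"
  define f where "f p = (if p = e then \<sigma> else 0) / mi_fact p * mi_pow ((1 / \<sigma>) *\<^sub>R x) p" for p
  have "(\<Sum>\<^sub>\<infinity>p. f p) = (\<Sum>\<^sub>\<infinity>p\<in>{e}. f p)"
    by (rule infsum_cong_neutral) (auto simp: f_def)
  also have "\<dots> = f e" by simp
  also have "mi_fact e = 1" unfolding mi_fact_def e_def by (rule prod.neutral) auto
  then have "f e = \<sigma> * mi_pow ((1 / \<sigma>) *\<^sub>R x) e" unfolding f_def by simp
  also have "mi_pow ((1 / \<sigma>) *\<^sub>R x) e = x$k / \<sigma>"
  proof -
    have "mi_pow ((1 / \<sigma>) *\<^sub>R x) e = (\<Prod>l\<in>UNIV. if l = k then x$l / \<sigma> else 1)"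
      unfolding mi_pow_def e_def by (rule prod.cong) auto
    also have "\<dots> = x$k / \<sigma>" by (simp add: prod.delta')
    finally show ?thesis .
  qed
  finally have "(\<Sum>\<^sub>\<infinity>p. f p) = x$k" using sig by simp
  then show ?thesis unfolding cbias_def pinv_id f_def e_def by simp
qed

theorem theorem5:
  fixes H :: "real^'n^'m" and U :: "real^'d^'m" and V :: "real^'d^'n" and Sig :: "real^'d^'d"
    and S :: nat and \<sigma> :: real and k :: 'n
    and x1 :: "real^'d" and C :: real and a :: "('d \<Rightarrow> nat) \<Rightarrow> real"
  assumes S_range: "1 \<le> S" "S \<le> CARD('n)"
    and spark: "spark H > enat S"
    and sigma_pos: "\<sigma> > 0"
    and rank: "rank H = CARD('d)"
    and U_orth: "transpose U ** U = mat 1"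
    and V_orth: "transpose V ** V = mat 1"
    and Sig_diag: "\<And>i j. i \<noteq> j \<Longrightarrow> Sig $ i $ j = 0"
    and Sig_pos: "\<And>i. Sig $ i $ i > 0"
    and svd: "H = U ** Sig ** transpose V"
    and C_nonneg: "C \<ge> 0"
    and a_bound: "\<And>p. \<bar>a p\<bar> \<le> C ^ mi_abs p"
  shows "(\<forall>x0\<in>sparse_set S.
            valid_bias H \<sigma> S k (cbias (pinv (V ** matrix_inv Sig)) \<sigma> x1 a k) x0)
       \<and> (\<forall>x\<in>sparse_set S.
            cbias (pinv ((mat 1 :: real^'n^'n) ** matrix_inv (mat 1 :: real^'n^'n))) \<sigma> 0
              (\<lambda>p. if p = (\<lambda>l. if l = k then 1 else 0) then \<sigma> else 0) k x = 0)"
proof (intro conjI ballI)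
  fix x :: "real^'n"
  show "cbias (pinv ((mat 1 :: real^'n^'n) ** matrix_inv (mat 1 :: real^'n^'n))) \<sigma> 0
              (\<lambda>p. if p = (\<lambda>l. if l = k then 1 else 0) then \<sigma> else 0) k x = 0"
    by (rule cbias_id_zero[OF sigma_pos])
next
  fix x0 :: "real^'n"
  have Hd: "pinv (V ** matrix_inv Sig) *v x = transpose U *v (H *v x)" for x
    by (rule pinv_svd[OF U_orth V_orth Sig_diag Sig_pos svd])
  obtain g where gm: "g \<in> borel_measurable borel" and
    gall: "\<And>mv. integrable (Gm \<sigma> mv) g \<and>
     (\<forall>r. integrable (Gm \<sigma> mv) (\<lambda>y. (g y - r)\<^sup>2)) \<and>
     (\<integral>y. g y \<partial>Gm \<sigma> mv) = exp (x1 \<bullet> (transpose U *v mv)) *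
        (\<Sum>\<^sub>\<infinity>p. a p / mi_fact p * mi_pow ((1/\<sigma>) *\<^sub>R (transpose U *v mv)) p)"
    using main_est[OF U_orth sigma_pos C_nonneg a_bound, of x1] by blast
  show "valid_bias H \<sigma> S k (cbias (pinv (V ** matrix_inv Sig)) \<sigma> x1 a k) x0"
    unfolding valid_bias_def
  proof (intro exI conjI ballI)
    show "g \<in> borel_measurable borel" by (rule gm)
    show "finite_variance H \<sigma> g x0"
      unfolding finite_variance_def gauss_obs_Gm using gall by blast
    fix x :: "real^'n" assume "x \<in> sparse_set S"
    show "integrable (gauss_obs H \<sigma> x) g" unfolding gauss_obs_Gm using gall by blast
    show "est_bias H \<sigma> k g x = cbias (pinv (V ** matrix_inv Sig)) \<sigma> x1 a k x"
      unfolding est_bias_def est_mean_def cbias_def gauss_obs_Gm Hd using gall by simp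
  qed
qed

end
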